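(* Let $n\ge1$, $\gamma\in[0,1]$, $\beta=\frac{2}{2-\gamma}$ and $\vartheta>0$. Then there exists $C>0$, depending only on $n,\gamma,\vartheta,\max_{[0,1]}h$ and $C_\circ$, such that for every $\varepsilon>0$, every nonnegative classical solution $u_\varepsilon$ of $\partial_tu_\varepsilon-\Delta u_\varepsilon=-f_\varepsilon(u_\varepsilon)$ in $Q_1$ satisfying $\sup_{Q_1}u_\varepsilon^{2/\beta}+\sup_{Q_1}|\nabla(u_\varepsilon^{1/\beta})|^2\le C_\circ$, every $r\in(0,\frac14)$ and every $(x_\circ,t_\circ)\in\{u_\varepsilon\le\vartheta\varepsilon^\beta\}\cap Q_{1/2}$, $$\sup_{Q_r(x_\circ,t_\circ)}u_\varepsilon\le C(\varepsilon^2+r^2)^{\frac{1}{2-\gamma}}.$$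
   Context: $h:\mathbb{R}\to[0,\infty)$ vanishes outside $[0,1]$, is $C^1$ on $[0,1]$, $h(0)=0$, $h'(0)>0$, $\int_0^1h=1$; $H(u)=\int_0^uh$ for $u>0$, $0$ otherwise; $f_\varepsilon(u)=\varepsilon^{-\beta}h(u/\varepsilon^\beta)u^\gamma+\gamma H(u/\varepsilon^\beta)u^{\gamma-1}$ for $u>0$, $f_\varepsilon(u)=0$ for $u\le0$ (the derivative of $F_\varepsilon(u)=H(u/\varepsilon^\beta)u^\gamma$). $C_\circ>0$ is a given constant. $Q_r(x_\circ,t_\circ)=B_r(x_\circ)\times(t_\circ-r^2,t_\circ+r^2)$, $Q_r=Q_r(0,0)$. *)

theory Defs
  imports "HOL-Analysis.Analysis"
begin

definition admissible_h :: "(real \<Rightarrow> real) \<Rightarrow> bool" where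
  "admissible_h h \<longleftrightarrow>
     (\<forall>s. h s \<ge> 0) \<and> (\<forall>s. s \<notin> {0..1} \<longrightarrow> h s = 0) \<and>
     (\<exists>h'. continuous_on {0..1} h' \<and>
          (\<forall>s\<in>{0..1}. (h has_real_derivative h' s) (at s within {0..1})) \<and>
          h' 0 > 0) \<and>
     h 0 = 0 \<and> integral {0..1} h = 1"

definition Hfun :: "(real \<Rightarrow> real) \<Rightarrow> real \<Rightarrow> real" where
  "Hfun h u = (if u > 0 then integral {0..u} h else 0)"

definition f_eps :: "(real \<Rightarrow> real) \<Rightarrow> real \<Rightarrow> real \<Rightarrow> real \<Rightarrow> real \<Rightarrow> real" where
  "f_eps h \<gamma> \<beta> \<epsilon> u =
     (if u > 0 then \<epsilon> powr (-\<beta>) * h (u / \<epsilon> powr \<beta>) * u powr \<gamma>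
                    + \<gamma> * Hfun h (u / \<epsilon> powr \<beta>) * u powr (\<gamma> - 1)
      else 0)"

definition cyl :: "real \<Rightarrow> real^'n \<Rightarrow> real \<Rightarrow> ((real^'n) \<times> real) set" where
  "cyl r x0 t0 = ball x0 r \<times> {t0 - r^2 <..< t0 + r^2}"

definition classical_solution ::
  "(real \<Rightarrow> real) \<Rightarrow> ((real^'n) \<times> real) set \<Rightarrow> (real^'n \<Rightarrow> real \<Rightarrow> real) \<Rightarrow> bool" where
  "classical_solution F Q u \<longleftrightarrow>
     (\<exists>ut ux uxx.
        continuous_on Q (\<lambda>(x,t). u x t) \<and>
        continuous_on Q (\<lambda>(x,t). ut x t) \<and>
        continuous_on Q (\<lambda>(x,t). ux x t) \<and>
        continuous_on Q (\<lambda>(x,t). uxx x t) \<and>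
        (\<forall>(x,t)\<in>Q.
           ((\<lambda>s. u x s) has_real_derivative ut x t) (at t) \<and>
           ((\<lambda>y. u y t) has_derivative (\<lambda>v. ux x t \<bullet> v)) (at x) \<and>
           ((\<lambda>y. ux y t) has_derivative (\<lambda>v. (uxx x t :: real^'n^'n) *v v)) (at x) \<and>
           ut x t - (\<Sum>i\<in>UNIV. uxx x t $ i $ i) = - F (u x t)))"

end

theory Submission
  imports Defs
begin

lemma second_deriv_max:
  fixes g g' :: "real \<Rightarrow> real"
  assumes eta: "\<eta> > 0"
    and dg: "\<forall>\<theta>. \<bar>\<theta>\<bar> < \<eta> \<longrightarrow> (g has_real_derivative g' \<theta>) (at \<theta>)"
    and dg': "(g' has_real_derivative d) (at 0)"
    and mx: "\<forall>\<theta>. \<bar>\<theta>\<bar> < \<eta> \<longrightarrow> g \<theta> \<le> g 0"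
  shows "d \<le> 0"
proof (rule ccontr)
  assume "\<not> d \<le> 0" hence d: "d > 0" by simp
  have g0: "g' 0 = 0"
    using DERIV_local_max[of g "g' 0" 0 \<eta>] dg mx eta by auto
  obtain \<delta> where \<delta>: "\<delta> > 0" "\<forall>h>0. h < \<delta> \<longrightarrow> g' 0 < g' (0 + h)"
    using DERIV_pos_inc_right[OF dg' d] by auto
  define h where "h = min \<delta> \<eta> / 2"
  have h: "0 < h" "h < \<delta>" "h < \<eta>" using \<delta> eta by (auto simp: h_def)
  have "g 0 < g h"
  proof (rule DERIV_pos_imp_increasing_open[of 0 h g])
    show "0 < h" by fact
    fix x assume "0 < x" "x < h"
    thus "\<exists>y. DERIV g x :> y \<and> y > 0"
      using dg \<delta> h g0 by (intro exI[of _ "g' x"]) auto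
  next
    show "continuous_on {0..h} g"
      using dg h by (intro DERIV_continuous_on[where D = g']) (auto intro: has_field_derivative_at_within)
  qed
  moreover have "g h \<le> g 0" using mx h by auto
  ultimately show False by simp
qed

lemma first_deriv_left_max:
  fixes g :: "real \<Rightarrow> real"
  assumes dg: "(g has_real_derivative d) (at t)" and eta: "\<eta> > 0"
    and mx: "\<forall>s. t - \<eta> < s \<and> s < t \<longrightarrow> g s \<le> g t"
  shows "d \<ge> 0"
proof (rule ccontr)
  assume "\<not> d \<ge> 0" hence "d < 0" by simp
  then obtain \<delta> where \<delta>: "\<delta> > 0" "\<forall>h>0. h < \<delta> \<longrightarrow> g t < g (t - h)"
    using DERIV_neg_dec_left[OF dg] by auto
  define h where "h = min \<delta> \<eta> / 2"
  have h: "0 < h" "h < \<delta>" "h < \<eta>" using \<delta> eta by (auto simp: h_def)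
  have "g t < g (t - h)" using \<delta> h by auto
  moreover have "g (t - h) \<le> g t" using mx h by auto
  ultimately show False by simp
qed

lemma first_contact:
  fixes Z :: "real^'n \<Rightarrow> real \<Rightarrow> real"
  assumes cont: "continuous_on (cball xc R \<times> {t1..T}) (\<lambda>(y,s). Z y s)"
    and init: "\<forall>y\<in>cball xc R. Z y t1 < 0"
    and lat: "\<forall>y s. dist xc y = R \<and> s \<in> {t1..T} \<longrightarrow> Z y s < 0"
    and ex: "y0 \<in> cball xc R" "s0 \<in> {t1..T}" "Z y0 s0 \<ge> 0"
  shows "\<exists>ys ts. ys \<in> ball xc R \<and> t1 < ts \<and> ts \<le> T \<and> Z ys ts = 0 \<and>
           (\<forall>y\<in>cball xc R. Z y ts \<le> 0) \<and> (\<forall>s. t1 \<le> s \<and> s < ts \<longrightarrow> Z ys s < 0)"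
proof -
  define D where "D = cball xc R \<times> {t1..T}"
  define P where "P = D \<inter> (\<lambda>(y,s). Z y s) -` {0..}"
  have cD: "compact D" unfolding D_def by (intro compact_Times) auto
  have "closed P" unfolding P_def
    using continuous_closed_preimage[OF cont[folded D_def]] compact_imp_closed[OF cD] by auto
  hence "compact (P \<inter> D)" using cD by (rule closed_Int_compact)
  moreover have "P \<inter> D = P" by (auto simp: P_def)
  ultimately have cP: "compact P" by simp
  have cS: "compact (snd ` P)"
  proof (rule compact_continuous_image[OF _ cP])
    show "continuous_on P snd" using continuous_on_snd[OF continuous_on_id] by (simp add: id_def)
  qed
  have "(y0, s0) \<in> P" using ex unfolding P_def D_def by auto
  hence ne: "snd ` P \<noteq> {}" by auto
  obtain ts where ts: "ts \<in> snd ` P" "\<forall>s\<in>snd ` P. ts \<le> s"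
    using compact_attains_inf[OF cS ne] by auto
  then obtain ys where ysP: "(ys, ts) \<in> P" by force
  hence ys: "ys \<in> cball xc R" "ts \<in> {t1..T}" "Z ys ts \<ge> 0" unfolding P_def D_def by auto
  have neg: "Z y s < 0" if "y \<in> cball xc R" "t1 \<le> s" "s < ts" for y s
  proof (rule ccontr)
    assume "\<not> Z y s < 0"
    hence "(y, s) \<in> P" using that ys unfolding P_def D_def by auto
    hence "ts \<le> s" using ts by force
    thus False using that by simp
  qed
  have "ts \<noteq> t1"
  proof
    assume "ts = t1" thus False using init ys(1) ys(3) by fastforce
  qed
  hence t1ts: "t1 < ts" using ys by auto
  have le0: "Z y ts \<le> 0" if y: "y \<in> cball xc R" for y
  proof (rule ccontr)
    assume "\<not> Z y ts \<le> 0" hence pos: "Z y ts > 0" by simp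
    have "continuous_on {t1..T} (\<lambda>s. Z y s)"
    proof -
      have "continuous_on {t1..T} ((\<lambda>(y,s). Z y s) \<circ> (\<lambda>s. (y, s)))"
        by (rule continuous_on_compose[OF _ continuous_on_subset[OF cont]])
           (use y in \<open>auto intro!: continuous_intros\<close>)
      thus ?thesis by (simp add: o_def)
    qed
    then obtain d where d: "d > 0" "\<forall>s'\<in>{t1..T}. dist s' ts < d \<longrightarrow> dist (Z y s') (Z y ts) < Z y ts"
      using pos ys(2) unfolding continuous_on_iff by blast
    define s' where "s' = max t1 (ts - d/2)"
    have "s' \<in> {t1..T}" "dist s' ts < d" "s' < ts" using d t1ts ys(2) by (auto simp: s'_def dist_real_def)
    hence "\<bar>Z y s' - Z y ts\<bar> < Z y ts" using d(2) by (auto simp: dist_real_def)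
    hence "Z y s' > 0" by linarith
    moreover have "Z y s' < 0" using neg[OF y] \<open>s' < ts\<close> by (auto simp: s'_def)
    ultimately show False by simp
  qed
  have z: "Z ys ts = 0" using le0[OF ys(1)] ys(3) by simp
  have "dist xc ys \<noteq> R" using lat ys z by force
  hence "ys \<in> ball xc R" using ys(1) by auto
  moreover have A: "\<forall>s. t1 \<le> s \<and> s < ts \<longrightarrow> Z ys s < 0" using neg ys(1) by blast
  moreover have B: "\<forall>y\<in>cball xc R. Z y ts \<le> 0" using le0 by blast
  moreover have "ts \<le> T" using ys(2) by simp
  ultimately show ?thesis using t1ts z by blast
qed


lemma line_deriv:
  fixes f :: "real^'n \<Rightarrow> real"
  assumes "(f has_derivative (\<lambda>v. G \<bullet> v)) (at (y + \<theta> *\<^sub>R e))"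
  shows "((\<lambda>s. f (y + s *\<^sub>R e)) has_real_derivative (G \<bullet> e)) (at \<theta>)"
proof -
  have l: "((\<lambda>s. y + s *\<^sub>R e) has_derivative (\<lambda>h. h *\<^sub>R e)) (at \<theta>)"
    by (auto intro!: derivative_eq_intros)
  have "((f \<circ> (\<lambda>s. y + s *\<^sub>R e)) has_derivative ((\<lambda>v. G \<bullet> v) \<circ> (\<lambda>h. h *\<^sub>R e))) (at \<theta>)"
    by (rule diff_chain_at[OF l]) (simp add: assms)
  thus ?thesis by (simp add: o_def has_field_derivative_def mult_commute_abs)
qed

lemma line_deriv_vec:
  fixes g :: "real^'n \<Rightarrow> real^'n"
  assumes "(g has_derivative (\<lambda>v. H *v v)) (at y)"
  shows "((\<lambda>s. g (y + s *\<^sub>R e) \<bullet> e) has_real_derivative ((H *v e) \<bullet> e)) (at 0)"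
proof -
  have l: "((\<lambda>s. y + s *\<^sub>R e) has_derivative (\<lambda>h. h *\<^sub>R e)) (at 0)"
    by (auto intro!: derivative_eq_intros)
  have "((g \<circ> (\<lambda>s. y + s *\<^sub>R e)) has_derivative ((\<lambda>v. H *v v) \<circ> (\<lambda>h. h *\<^sub>R e))) (at 0)"
    by (rule diff_chain_at[OF l]) (simp add: assms)
  hence "((\<lambda>s. (g \<circ> (\<lambda>s. y + s *\<^sub>R e)) s \<bullet> e) has_derivative (\<lambda>h. ((\<lambda>v. H *v v) \<circ> (\<lambda>h. h *\<^sub>R e)) h \<bullet> e)) (at 0)"
    by (rule has_derivative_inner_left)
  thus ?thesis by (simp add: o_def has_field_derivative_def mult_commute_abs matrix_vector_mult_scaleR)
qed

lemma axis_diag: "((H::real^'n^'n) *v axis i 1) \<bullet> axis i 1 = H $ i $ i"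
  by (metis cart_eq_inner_axis matrix_vector_mul_component)


lemma max_principle:
  fixes u w :: "real^'n \<Rightarrow> real \<Rightarrow> real"
  assumes sol: "classical_solution F (cyl 1 0 0) u"
    and sub: "cball xc R \<times> {t1..T} \<subseteq> cyl 1 0 0"
    and zeta: "\<zeta> = 1 \<or> \<zeta> = -1"
    and wcont: "continuous_on (cball xc R \<times> {t1..T}) (\<lambda>(y,s). w y s)"
    and init: "\<forall>y\<in>cball xc R. \<zeta> * (w y t1 - u y t1) < 0"
    and lat: "\<forall>y s. dist xc y = R \<and> s \<in> {t1..T} \<longrightarrow> \<zeta> * (w y s - u y s) < 0"
    and bar: "\<forall>y s. y \<in> ball xc R \<and> t1 < s \<and> s \<le> T \<and> w y s = u y s \<longrightarrow>
       (\<exists>wt W2 \<eta>. \<eta> > 0 \<and> ((\<lambda>s. w y s) has_real_derivative wt) (at s) \<and>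
          (\<forall>i. \<exists>d1. (\<forall>\<theta>. \<bar>\<theta>\<bar> < \<eta> \<longrightarrow> ((\<lambda>\<theta>. w (y + \<theta> *\<^sub>R axis i 1) s) has_real_derivative d1 \<theta>) (at \<theta>))
                 \<and> (d1 has_real_derivative W2 i) (at 0)) \<and>
          \<zeta> * (wt - (\<Sum>i\<in>UNIV. W2 i) + F (w y s)) < 0)"
  shows "\<forall>y\<in>cball xc R. \<forall>s\<in>{t1..T}. \<zeta> * (w y s - u y s) < 0"
proof (rule ccontr)
  assume "\<not> ?thesis"
  then obtain y0 s0 where ex: "y0 \<in> cball xc R" "s0 \<in> {t1..T}" "\<zeta> * (w y0 s0 - u y0 s0) \<ge> 0"
    by force
  obtain ut ux uxx where U:
    "continuous_on (cyl 1 0 0) (\<lambda>(x,t). u x t)"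
    "\<forall>(x,t)\<in>cyl 1 0 0.
           ((\<lambda>s. u x s) has_real_derivative ut x t) (at t) \<and>
           ((\<lambda>y. u y t) has_derivative (\<lambda>v. ux x t \<bullet> v)) (at x) \<and>
           ((\<lambda>y. ux y t) has_derivative (\<lambda>v. (uxx x t :: real^'n^'n) *v v)) (at x) \<and>
           ut x t - (\<Sum>i\<in>UNIV. uxx x t $ i $ i) = - F (u x t)"
    using sol unfolding classical_solution_def by blast
  define Z where "Z = (\<lambda>y s. \<zeta> * (w y s - u y s))"
  have ucont: "continuous_on (cball xc R \<times> {t1..T}) (\<lambda>(y,s). u y s)"
    by (rule continuous_on_subset[OF U(1) sub])
  have Zcont: "continuous_on (cball xc R \<times> {t1..T}) (\<lambda>(y,s). Z y s)"
  proof -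
    have "continuous_on (cball xc R \<times> {t1..T}) (\<lambda>p. \<zeta> * ((\<lambda>(y,s). w y s) p - (\<lambda>(y,s). u y s) p))"
      by (intro continuous_intros wcont ucont)
    thus ?thesis unfolding Z_def by (simp add: case_prod_beta')
  qed
  obtain ys ts where C: "ys \<in> ball xc R" "t1 < ts" "ts \<le> T" "Z ys ts = 0"
     "\<forall>y\<in>cball xc R. Z y ts \<le> 0" "\<forall>s. t1 \<le> s \<and> s < ts \<longrightarrow> Z ys s < 0"
    using first_contact[of xc R t1 T Z y0 s0] Zcont init lat ex unfolding Z_def by blast
  have zne: "\<zeta> \<noteq> 0" using zeta by auto
  have wu: "w ys ts = u ys ts" using C(4) zne unfolding Z_def by simp
  obtain wt W2 \<eta> where B: "\<eta> > 0" "((\<lambda>s. w ys s) has_real_derivative wt) (at ts)"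
     "\<forall>i. \<exists>d1. (\<forall>\<theta>. \<bar>\<theta>\<bar> < \<eta> \<longrightarrow> ((\<lambda>\<theta>. w (ys + \<theta> *\<^sub>R axis i 1) ts) has_real_derivative d1 \<theta>) (at \<theta>))
                 \<and> (d1 has_real_derivative W2 i) (at 0)"
     "\<zeta> * (wt - (\<Sum>i\<in>UNIV. W2 i) + F (w ys ts)) < 0"
    using bar C(1-3) wu by blast
  have inQ: "(y, ts) \<in> cyl 1 0 0" if "y \<in> cball xc R" for y
    using sub that C(2,3) by auto
  have ysQ: "(ys, ts) \<in> cyl 1 0 0" using inQ C(1) by auto
  note Uys = U(2)[rule_format, OF ysQ]
  have tder: "\<zeta> * (wt - ut ys ts) \<ge> 0"
  proof (rule first_deriv_left_max[of "\<lambda>s. Z ys s" _ ts "ts - t1"])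
    show "((\<lambda>s. Z ys s) has_real_derivative \<zeta> * (wt - ut ys ts)) (at ts)"
      unfolding Z_def using B(2) Uys by (auto intro!: derivative_eq_intros)
    show "ts - t1 > 0" using C(2) by simp
    show "\<forall>s. ts - (ts - t1) < s \<and> s < ts \<longrightarrow> Z ys s \<le> Z ys ts"
    proof (intro allI impI)
      fix s assume "ts - (ts - t1) < s \<and> s < ts"
      hence "t1 \<le> s \<and> s < ts" by simp
      hence "Z ys s < 0" using C(6) by blast
      thus "Z ys s \<le> Z ys ts" using C(4) by simp
    qed
  qed
  have sder: "\<zeta> * (W2 i - uxx ys ts $ i $ i) \<le> 0" for i
  proof -
    obtain d1 where d1: "\<forall>\<theta>. \<bar>\<theta>\<bar> < \<eta> \<longrightarrow> ((\<lambda>\<theta>. w (ys + \<theta> *\<^sub>R axis i 1) ts) has_real_derivative d1 \<theta>) (at \<theta>)"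
      "(d1 has_real_derivative W2 i) (at 0)" using B(3) by blast
    define e :: "real^'n" where "e = axis i 1"
    have ne: "norm e = 1" by (simp add: e_def)
    define \<eta>2 where "\<eta>2 = min \<eta> (R - dist xc ys)"
    have \<eta>2: "\<eta>2 > 0" using B(1) C(1) by (auto simp: \<eta>2_def)
    have inball: "ys + \<theta> *\<^sub>R e \<in> cball xc R" if "\<bar>\<theta>\<bar> < \<eta>2" for \<theta>
    proof -
      have "dist xc (ys + \<theta> *\<^sub>R e) \<le> dist xc ys + norm (\<theta> *\<^sub>R e)"
        by (metis dist_commute dist_triangle2 dist_add_cancel dist_norm add_0_right  add.commute diff_zero norm_minus_commute dist_0_norm add_diff_cancel_left' dist_triangle)
      also have "norm (\<theta> *\<^sub>R e) = \<bar>\<theta>\<bar>" using ne by simp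
      finally show ?thesis using that by (auto simp: \<eta>2_def)
    qed
    show ?thesis
    proof (rule second_deriv_max[of \<eta>2 "\<lambda>\<theta>. Z (ys + \<theta> *\<^sub>R e) ts"
         "\<lambda>\<theta>. \<zeta> * (d1 \<theta> - ux (ys + \<theta> *\<^sub>R e) ts \<bullet> e)"])
      show "\<eta>2 > 0" by fact
      show "\<forall>\<theta>. \<bar>\<theta>\<bar> < \<eta>2 \<longrightarrow> ((\<lambda>\<theta>. Z (ys + \<theta> *\<^sub>R e) ts) has_real_derivative
              \<zeta> * (d1 \<theta> - ux (ys + \<theta> *\<^sub>R e) ts \<bullet> e)) (at \<theta>)"
      proof (intro allI impI)
        fix \<theta> :: real assume th: "\<bar>\<theta>\<bar> < \<eta>2"
        have Q: "(ys + \<theta> *\<^sub>R e, ts) \<in> cyl 1 0 0" using inQ inball th by blast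
        have du: "((\<lambda>y. u y ts) has_derivative (\<lambda>v. ux (ys + \<theta> *\<^sub>R e) ts \<bullet> v)) (at (ys + \<theta> *\<^sub>R e))"
          using U(2) Q by fastforce
        have "((\<lambda>s. u (ys + s *\<^sub>R e) ts) has_real_derivative (ux (ys + \<theta> *\<^sub>R e) ts \<bullet> e)) (at \<theta>)"
          by (rule line_deriv[OF du])
        moreover have "((\<lambda>\<theta>. w (ys + \<theta> *\<^sub>R e) ts) has_real_derivative d1 \<theta>) (at \<theta>)"
          using d1(1) th by (auto simp: e_def \<eta>2_def)
        ultimately show "((\<lambda>\<theta>. Z (ys + \<theta> *\<^sub>R e) ts) has_real_derivative
              \<zeta> * (d1 \<theta> - ux (ys + \<theta> *\<^sub>R e) ts \<bullet> e)) (at \<theta>)"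
          unfolding Z_def by (auto intro!: derivative_eq_intros)
      qed
      have "((\<lambda>s. ux (ys + s *\<^sub>R e) ts \<bullet> e) has_real_derivative ((uxx ys ts *v e) \<bullet> e)) (at 0)"
        by (rule line_deriv_vec) (use Uys in auto)
      hence "((\<lambda>\<theta>. \<zeta> * (d1 \<theta> - ux (ys + \<theta> *\<^sub>R e) ts \<bullet> e)) has_real_derivative
               \<zeta> * (W2 i - (uxx ys ts *v e) \<bullet> e)) (at 0)"
        using d1(2) by (auto intro!: derivative_eq_intros)
      thus "((\<lambda>\<theta>. \<zeta> * (d1 \<theta> - ux (ys + \<theta> *\<^sub>R e) ts \<bullet> e)) has_real_derivative
               \<zeta> * (W2 i - uxx ys ts $ i $ i)) (at 0)"
        by (simp add: e_def axis_diag)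
      show "\<forall>\<theta>. \<bar>\<theta>\<bar> < \<eta>2 \<longrightarrow> Z (ys + \<theta> *\<^sub>R e) ts \<le> Z (ys + 0 *\<^sub>R e) ts"
        using C(4,5) inball by simp
    qed
  qed
  have "\<zeta> * ((\<Sum>i\<in>UNIV. W2 i) - (\<Sum>i\<in>UNIV. uxx ys ts $ i $ i)) \<le> 0"
  proof -
    have "\<zeta> * ((\<Sum>i\<in>UNIV. W2 i) - (\<Sum>i\<in>UNIV. uxx ys ts $ i $ i)) = (\<Sum>i\<in>UNIV. \<zeta> * (W2 i - uxx ys ts $ i $ i))"
      by (simp add: sum_distrib_left sum_subtractf right_diff_distrib)
    also have "\<dots> \<le> 0" by (rule sum_nonpos) (use sder in auto)
    finally show ?thesis .
  qed
  moreover have "ut ys ts - (\<Sum>i\<in>UNIV. uxx ys ts $ i $ i) = - F (w ys ts)" using Uys wu by simp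
  ultimately have "\<zeta> * (wt - (\<Sum>i\<in>UNIV. W2 i) + F (w ys ts)) \<ge> 0" using tder
    by (simp add: algebra_simps) (smt (verit) right_diff_distrib)
  thus False using B(4) by simp
qed


lemma norm_line_sq:
  fixes a :: "real^'n"
  shows "(norm (a + \<theta> *\<^sub>R axis i 1))\<^sup>2 = (norm a)\<^sup>2 + 2 * \<theta> * a $ i + \<theta>\<^sup>2"
proof -
  have "(norm (a + \<theta> *\<^sub>R axis i 1))\<^sup>2 = (a + \<theta> *\<^sub>R axis i 1) \<bullet> (a + \<theta> *\<^sub>R axis i 1)"
    by (simp add: power2_norm_eq_inner)
  also have "\<dots> = a \<bullet> a + 2 * \<theta> * (a \<bullet> axis i 1) + \<theta>\<^sup>2 * (axis i 1 \<bullet> (axis i (1::real)) :: real)"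
    by (simp add: inner_add_left inner_add_right inner_commute power2_eq_square algebra_simps)
  also have "\<dots> = (norm a)\<^sup>2 + 2 * \<theta> * a $ i + \<theta>\<^sup>2"
    by (simp add: power2_norm_eq_inner inner_axis inner_axis_axis)
  finally show ?thesis .
qed

lemma norm_sq_sum:
  fixes a :: "real^'n"
  shows "(norm a)\<^sup>2 = (\<Sum>i\<in>UNIV. (a $ i)\<^sup>2)"
  unfolding power2_norm_eq_inner by (simp add: inner_vec_def power2_eq_square)

lemma abs_comp_le_norm:
  fixes a :: "real^'n"
  shows "\<bar>a $ i\<bar> \<le> norm a"
  by (metis component_le_norm_cart real_norm_def)

lemma radial_time:
  fixes \<Phi> :: "real \<Rightarrow> real"
  assumes "(\<Phi> has_real_derivative \<Phi>1) (at (\<alpha> + \<tau> * s + \<sigma> * c))"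
  shows "((\<lambda>s. \<Phi> (\<alpha> + \<tau> * s + \<sigma> * c)) has_real_derivative \<Phi>1 * \<tau>) (at s)"
proof -
  have "((\<lambda>s. \<alpha> + \<tau> * s + \<sigma> * c) has_real_derivative \<tau>) (at s)"
    by (auto intro!: derivative_eq_intros)
  from DERIV_chain2[OF assms this] show ?thesis .
qed

lemma radial_space:
  fixes \<Phi> \<Phi>1 :: "real \<Rightarrow> real" and xc y :: "real^'n"
  assumes eta: "\<eta> > 0"
    and d1: "\<forall>z. \<bar>z - z0\<bar> < \<eta> \<longrightarrow> (\<Phi> has_real_derivative \<Phi>1 z) (at z)"
    and d2: "(\<Phi>1 has_real_derivative \<Phi>2) (at z0)"
    and z0: "z0 = \<alpha> + \<sigma> * (norm (y - xc))\<^sup>2"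
  shows "\<exists>\<eta>'>0. \<forall>i. \<exists>d. (\<forall>\<theta>. \<bar>\<theta>\<bar> < \<eta>' \<longrightarrow>
            ((\<lambda>\<theta>. \<Phi> (\<alpha> + \<sigma> * (norm (y + \<theta> *\<^sub>R axis i 1 - xc))\<^sup>2)) has_real_derivative d \<theta>) (at \<theta>))
          \<and> (d has_real_derivative (4 * \<sigma>\<^sup>2 * ((y - xc) $ i)\<^sup>2 * \<Phi>2 + 2 * \<sigma> * \<Phi>1 z0)) (at 0)"
proof -
  define N where "N = norm (y - xc)"
  define \<eta>' where "\<eta>' = min 1 (\<eta> / (\<bar>\<sigma>\<bar> * (2 * N + 1) + 1))"
  have Npos: "N \<ge> 0" by (simp add: N_def)
  have den: "\<bar>\<sigma>\<bar> * (2 * N + 1) + 1 > 0" using Npos by (simp add: add_nonneg_pos)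
  have \<eta>'pos: "\<eta>' > 0" using eta den by (simp add: \<eta>'_def)
  show ?thesis
  proof (intro exI[of _ \<eta>'] conjI allI \<eta>'pos)
    fix i
    define b where "b = (y - xc) $ i"
    have bN: "\<bar>b\<bar> \<le> N" unfolding b_def N_def by (rule abs_comp_le_norm)
    define g where "g = (\<lambda>\<theta>::real. z0 + \<sigma> * (2 * \<theta> * b + \<theta>\<^sup>2))"
    have eq: "\<alpha> + \<sigma> * (norm (y + \<theta> *\<^sub>R axis i 1 - xc))\<^sup>2 = g \<theta>" for \<theta>
    proof -
      have veq: "y + \<theta> *\<^sub>R axis i 1 - xc = (y - xc) + \<theta> *\<^sub>R axis i 1" by (simp add: algebra_simps)
      have n: "(norm (y + \<theta> *\<^sub>R axis i 1 - xc))\<^sup>2 = (norm (y - xc))\<^sup>2 + 2 * \<theta> * b + \<theta>\<^sup>2"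
        by (simp only: veq norm_line_sq b_def)
      show ?thesis unfolding g_def z0 n by (simp add: algebra_simps)
    qed
    have gd: "(g has_real_derivative \<sigma> * (2 * b + 2 * \<theta>)) (at \<theta>)" for \<theta>
      unfolding g_def by (auto intro!: derivative_eq_intros simp: algebra_simps)
    have gclose: "\<bar>g \<theta> - z0\<bar> < \<eta>" if th: "\<bar>\<theta>\<bar> < \<eta>'" for \<theta>
    proof -
      have th1: "\<bar>\<theta>\<bar> < 1" "\<bar>\<theta>\<bar> * (\<bar>\<sigma>\<bar> * (2 * N + 1) + 1) < \<eta>"
        using th den by (auto simp: \<eta>'_def less_divide_eq)
      have "\<bar>g \<theta> - z0\<bar> = \<bar>\<sigma>\<bar> * \<bar>2 * \<theta> * b + \<theta>\<^sup>2\<bar>" by (simp add: g_def abs_mult)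
      also have "\<dots> \<le> \<bar>\<sigma>\<bar> * (\<bar>\<theta>\<bar> * (2 * N + 1))"
      proof (rule mult_left_mono)
        have "\<bar>2 * \<theta> * b + \<theta>\<^sup>2\<bar> \<le> 2 * \<bar>\<theta>\<bar> * \<bar>b\<bar> + \<bar>\<theta>\<bar> * \<bar>\<theta>\<bar>"
          by (simp add: abs_mult power2_eq_square abs_triangle_ineq[THEN order_trans])
        also have "\<dots> \<le> 2 * \<bar>\<theta>\<bar> * N + \<bar>\<theta>\<bar> * 1"
          using bN th1 by (intro add_mono mult_left_mono mult_mono) auto
        finally show "\<bar>2 * \<theta> * b + \<theta>\<^sup>2\<bar> \<le> \<bar>\<theta>\<bar> * (2 * N + 1)" by (simp add: algebra_simps)
      qed simp
      also have "\<dots> \<le> \<bar>\<theta>\<bar> * (\<bar>\<sigma>\<bar> * (2 * N + 1) + 1)" by (simp add: algebra_simps)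
      also have "\<dots> < \<eta>" by (rule th1(2))
      finally show ?thesis .
    qed
    show "\<exists>d. (\<forall>\<theta>. \<bar>\<theta>\<bar> < \<eta>' \<longrightarrow>
            ((\<lambda>\<theta>. \<Phi> (\<alpha> + \<sigma> * (norm (y + \<theta> *\<^sub>R axis i 1 - xc))\<^sup>2)) has_real_derivative d \<theta>) (at \<theta>))
          \<and> (d has_real_derivative (4 * \<sigma>\<^sup>2 * ((y - xc) $ i)\<^sup>2 * \<Phi>2 + 2 * \<sigma> * \<Phi>1 z0)) (at 0)"
    proof (intro exI[of _ "\<lambda>\<theta>. \<Phi>1 (g \<theta>) * (\<sigma> * (2 * b + 2 * \<theta>))"] conjI allI impI)
      fix \<theta> :: real assume th: "\<bar>\<theta>\<bar> < \<eta>'"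
      have "(\<Phi> has_real_derivative \<Phi>1 (g \<theta>)) (at (g \<theta>))" using d1 gclose[OF th] by blast
      from DERIV_chain2[OF this gd[of \<theta>]]
      show "((\<lambda>\<theta>. \<Phi> (\<alpha> + \<sigma> * (norm (y + \<theta> *\<^sub>R axis i 1 - xc))\<^sup>2)) has_real_derivative
              \<Phi>1 (g \<theta>) * (\<sigma> * (2 * b + 2 * \<theta>))) (at \<theta>)"
        by (simp add: eq)
    next
      have g0: "g 0 = z0" by (simp add: g_def)
      have "(\<Phi>1 has_real_derivative \<Phi>2) (at (g 0))" using d2 g0 by simp
      from DERIV_chain2[OF this gd[of 0]]
      have A: "((\<lambda>\<theta>. \<Phi>1 (g \<theta>)) has_real_derivative \<Phi>2 * (\<sigma> * (2 * b))) (at 0)" by simp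
      have B: "((\<lambda>\<theta>. \<sigma> * (2 * b + 2 * \<theta>)) has_real_derivative 2 * \<sigma>) (at 0)"
        by (auto intro!: derivative_eq_intros)
      have "((\<lambda>\<theta>. \<Phi>1 (g \<theta>) * (\<sigma> * (2 * b + 2 * \<theta>))) has_real_derivative
              \<Phi>2 * (\<sigma> * (2 * b)) * (\<sigma> * (2 * b + 2 * 0)) + 2 * \<sigma> * \<Phi>1 (g 0)) (at 0)"
        using DERIV_mult[OF A B] by (simp only: mult.commute)
      moreover have "\<Phi>2 * (\<sigma> * (2 * b)) * (\<sigma> * (2 * b + 2 * 0)) + 2 * \<sigma> * \<Phi>1 (g 0) =
          4 * \<sigma>\<^sup>2 * ((y - xc) $ i)\<^sup>2 * \<Phi>2 + 2 * \<sigma> * \<Phi>1 z0"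
        unfolding g0 b_def[symmetric] by (simp add: power2_eq_square algebra_simps)
      ultimately show "((\<lambda>\<theta>. \<Phi>1 (g \<theta>) * (\<sigma> * (2 * b + 2 * \<theta>))) has_real_derivative
              4 * \<sigma>\<^sup>2 * ((y - xc) $ i)\<^sup>2 * \<Phi>2 + 2 * \<sigma> * \<Phi>1 z0) (at 0)"
        by simp
    qed
  qed
qed

lemma radial_sum:
  fixes y xc :: "real^'n"
  shows "(\<Sum>i\<in>UNIV. 4 * \<sigma>\<^sup>2 * ((y - xc) $ i)\<^sup>2 * \<Phi>2 + 2 * \<sigma> * P1) =
         4 * \<sigma>\<^sup>2 * (norm (y - xc))\<^sup>2 * \<Phi>2 + 2 * real CARD('n) * \<sigma> * P1"
  by (simp add: sum.distrib norm_sq_sum[of "y - xc"] sum_distrib_left sum_distrib_right algebra_simps)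



lemma adm_cont:
  assumes "admissible_h h" shows "continuous_on {0..1} h"
proof -
  obtain h' where d: "\<forall>s\<in>{0..1}. (h has_real_derivative h' s) (at s within {0..1})"
    using assms unfolding admissible_h_def by blast
  show ?thesis unfolding continuous_on_eq_continuous_within
    using d DERIV_continuous by blast
qed

lemma adm_le_M:
  assumes "admissible_h h" "(SUP s\<in>{0..1}. h s) = M" "s \<in> {0..1::real}"
  shows "h s \<le> M"
proof -
  have "compact (h ` {0..1})" by (rule compact_continuous_image[OF adm_cont[OF assms(1)]]) auto
  hence "bdd_above (h ` {0..1})" by (rule compact_imp_bounded[THEN bounded_imp_bdd_above])
  thus ?thesis using assms(2,3) cSUP_upper by metis
qed

lemma adm_M_nonneg:
  assumes "admissible_h h" "(SUP s\<in>{0..1}. h s) = M"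
  shows "0 \<le> M"
  using adm_le_M[OF assms, of 0] assms(1) unfolding admissible_h_def by force

lemma Hfun_nonneg:
  assumes "admissible_h h" shows "0 \<le> Hfun h s"
proof (cases "s > 0")
  case True
  have nn: "\<forall>x. 0 \<le> h x" using assms unfolding admissible_h_def by blast
  show ?thesis
  proof (cases "h integrable_on {0..s}")
    case True thus ?thesis using nn \<open>s > 0\<close> by (simp add: Hfun_def integral_nonneg)
  next
    case False thus ?thesis using \<open>s > 0\<close> by (simp add: Hfun_def not_integrable_integral)
  qed
qed (simp add: Hfun_def)

lemma Hfun_le:
  assumes "admissible_h h" "(SUP s\<in>{0..1}. h s) = M" "0 < s" "s \<le> 1"
  shows "Hfun h s \<le> M * s"
proof -
  have "h integrable_on {0..s}"
    by (rule integrable_continuous_real[OF continuous_on_subset[OF adm_cont[OF assms(1)]]]) (use assms in auto)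
  hence "integral {0..s} h \<le> integral {0..s} (\<lambda>_. M)"
    by (rule integral_le) (use adm_le_M[OF assms(1,2)] assms in auto)
  thus ?thesis using assms by (simp add: Hfun_def mult.commute)
qed

lemma Hfun_one:
  assumes "admissible_h h" "1 < s"
  shows "Hfun h s = 1"
proof -
  have z: "\<forall>x. x \<notin> {0..1} \<longrightarrow> h x = 0" and i1: "integral {0..1} h = 1"
    using assms(1) unfolding admissible_h_def by blast+
  have "integral {0..s} h = integral {0..s} (\<lambda>x. if x \<in> {0..1} then h x else 0)"
    by (rule integral_cong) (use z in auto)
  also have "\<dots> = integral ({0..1} \<inter> {0..s}) h" by (rule integral_restrict_Int)
  also have "{0..1} \<inter> {0..s} = {0..1::real}" using assms(2) by auto
  finally show ?thesis using assms(2) i1 by (simp add: Hfun_def)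
qed

lemma f_eps_nonneg:
  assumes "admissible_h h" "0 \<le> \<gamma>"
  shows "0 \<le> f_eps h \<gamma> p \<epsilon> u"
proof -
  have "0 \<le> h x" for x using assms unfolding admissible_h_def by blast
  thus ?thesis unfolding f_eps_def using Hfun_nonneg[OF assms(1)] assms(2)
    by (auto intro!: add_nonneg_nonneg mult_nonneg_nonneg)
qed

definition k1 :: "real \<Rightarrow> real \<Rightarrow> real \<Rightarrow> real" where
  "k1 M \<gamma> \<sigma> = (if \<sigma> \<le> 1 then 2 * M else \<gamma> * \<sigma> powr (\<gamma> - 1))"

lemma f_eps_bound:
  assumes adm: "admissible_h h" and sup: "(SUP s\<in>{0..1}. h s) = M"
    and g: "0 \<le> \<gamma>" "\<gamma> \<le> 1" and p: "p = 2 / (2 - \<gamma>)" and e: "\<epsilon> > 0" and u: "0 \<le> u"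
  shows "f_eps h \<gamma> p \<epsilon> u \<le> \<epsilon> powr (p - 2) * k1 M \<gamma> (u / \<epsilon> powr p)"
proof (cases "u > 0")
  case False
  hence "u = 0" using u by simp
  thus ?thesis using adm_M_nonneg[OF adm sup] e by (simp add: f_eps_def k1_def)
next
  case True
  define \<sigma> where "\<sigma> = u / \<epsilon> powr p"
  have ep: "\<epsilon> powr p > 0" using e by simp
  have sp: "\<sigma> > 0" using True ep by (simp add: \<sigma>_def)
  have ueq: "u = \<sigma> * \<epsilon> powr p" using ep by (simp add: \<sigma>_def)
  have pg: "p * (\<gamma> - 1) = p - 2" using g p by (simp add: field_simps)
  have a1: "\<epsilon> powr (-p) * u powr \<gamma> = \<epsilon> powr (p - 2) * \<sigma> powr \<gamma>"
  proof -
    have "u powr \<gamma> = \<sigma> powr \<gamma> * \<epsilon> powr (p * \<gamma>)"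
      using sp e by (simp add: ueq powr_mult powr_powr)
    moreover have "\<epsilon> powr (-p) * \<epsilon> powr (p * \<gamma>) = \<epsilon> powr (p - 2)"
      by (simp add: powr_add[symmetric] pg[symmetric] algebra_simps)
    ultimately show ?thesis by (simp add: algebra_simps)
  qed
  have a2: "u powr (\<gamma> - 1) = \<epsilon> powr (p - 2) * \<sigma> powr (\<gamma> - 1)"
    using sp e by (simp add: ueq powr_mult powr_powr pg mult.commute)
  have "f_eps h \<gamma> p \<epsilon> u = \<epsilon> powr (-p) * h \<sigma> * u powr \<gamma> + \<gamma> * Hfun h \<sigma> * u powr (\<gamma> - 1)"
    using True by (simp add: f_eps_def \<sigma>_def)
  also have "\<dots> = h \<sigma> * (\<epsilon> powr (-p) * u powr \<gamma>) + \<gamma> * Hfun h \<sigma> * u powr (\<gamma> - 1)"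
    by (simp only: mult_ac)
  also have "\<dots> = h \<sigma> * (\<epsilon> powr (p - 2) * \<sigma> powr \<gamma>) + \<gamma> * Hfun h \<sigma> * (\<epsilon> powr (p - 2) * \<sigma> powr (\<gamma> - 1))"
    by (simp only: a1 a2)
  also have "\<dots> = \<epsilon> powr (p - 2) * (h \<sigma> * \<sigma> powr \<gamma> + \<gamma> * Hfun h \<sigma> * \<sigma> powr (\<gamma> - 1))"
    by (simp add: algebra_simps)
  finally have f: "f_eps h \<gamma> p \<epsilon> u = \<epsilon> powr (p - 2) * (h \<sigma> * \<sigma> powr \<gamma> + \<gamma> * Hfun h \<sigma> * \<sigma> powr (\<gamma> - 1))" .
  show ?thesis
  proof (cases "\<sigma> \<le> 1")
    case True
    have hM: "h \<sigma> \<le> M" using adm_le_M[OF adm sup] True sp by auto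
    have HM: "Hfun h \<sigma> \<le> M * \<sigma>" using Hfun_le[OF adm sup sp True] .
    have s1: "\<sigma> powr \<gamma> \<le> 1" using True sp g by (intro powr_le1) auto
    have s2: "\<sigma> * \<sigma> powr (\<gamma> - 1) = \<sigma> powr \<gamma>" using sp by (simp add: powr_diff)
    have M0: "0 \<le> M" by (rule adm_M_nonneg[OF adm sup])
    have hnn: "0 \<le> h \<sigma>" using adm unfolding admissible_h_def by blast
    have "h \<sigma> * \<sigma> powr \<gamma> \<le> h \<sigma>" by (rule mult_left_le[OF s1 hnn])
    hence "h \<sigma> * \<sigma> powr \<gamma> \<le> M" using hM by linarith
    moreover have "\<gamma> * Hfun h \<sigma> * \<sigma> powr (\<gamma> - 1) \<le> M"
    proof -
      have "Hfun h \<sigma> * \<sigma> powr (\<gamma> - 1) \<le> M * \<sigma> * \<sigma> powr (\<gamma> - 1)"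
        using HM by (intro mult_right_mono) auto
      also have "\<dots> = M * \<sigma> powr \<gamma>" using s2 by (simp add: mult.assoc)
      also have "\<dots> \<le> M" using s1 M0 by (simp add: mult_left_le)
      finally have "Hfun h \<sigma> * \<sigma> powr (\<gamma> - 1) \<le> M" .
      moreover have "0 \<le> Hfun h \<sigma> * \<sigma> powr (\<gamma> - 1)" using Hfun_nonneg[OF adm] by simp
      ultimately have "\<gamma> * (Hfun h \<sigma> * \<sigma> powr (\<gamma> - 1)) \<le> M" using g
        by (meson mult_left_le_one_le order_trans)
      thus ?thesis by (simp add: mult.assoc)
    qed
    ultimately have "h \<sigma> * \<sigma> powr \<gamma> + \<gamma> * Hfun h \<sigma> * \<sigma> powr (\<gamma> - 1) \<le> 2 * M" by simp
    thus ?thesis using f True e by (simp add: k1_def \<sigma>_def[symmetric])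
  next
    case False
    have "h \<sigma> = 0" using adm False unfolding admissible_h_def by auto
    moreover have "Hfun h \<sigma> = 1" using Hfun_one[OF adm] False by simp
    ultimately show ?thesis using f False by (simp add: k1_def \<sigma>_def[symmetric])
  qed
qed



lemma powr_comp_deriv:
  fixes f :: "real^'n \<Rightarrow> real"
  assumes "(f has_derivative (\<lambda>v. G \<bullet> v)) (at x)" "f x > 0"
  shows "((\<lambda>y. f y powr q) has_derivative (\<lambda>v. ((q * f x powr (q - 1)) *\<^sub>R G) \<bullet> v)) (at x)"
proof -
  have "((\<lambda>r. r powr q) has_derivative (\<lambda>h. (q * f x powr (q - 1)) * h)) (at (f x))"
    using has_real_derivative_powr[OF assms(2), of q] by (simp add: has_field_derivative_def)
  from diff_chain_at[OF assms(1) this]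
  show ?thesis by (simp add: o_def)
qed

lemma lipschitz_v:
  fixes u :: "real^'n \<Rightarrow> real \<Rightarrow> real"
  assumes sol: "classical_solution F (cyl 1 0 0) u"
    and nonneg: "\<forall>(x,t)\<in>cyl 1 0 0. u x t \<ge> 0"
    and grad: "\<forall>(x,t)\<in>cyl 1 0 0. \<forall>g. u x t > 0 \<and>
                ((\<lambda>y. u y t powr q) has_derivative (\<lambda>v. g \<bullet> v)) (at x) \<longrightarrow> (norm g)\<^sup>2 \<le> B"
    and q: "q > 0" and B: "B \<ge> 0"
    and y: "y \<in> ball 0 1" and z: "z \<in> ball 0 1" and t: "-1 < t" "t < 1"
  shows "u z t powr q \<le> u y t powr q + sqrt B * dist y z"
proof -
  obtain ut ux uxx where U:
    "\<forall>(x,t)\<in>cyl 1 0 0.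
           ((\<lambda>y. u y t) has_derivative (\<lambda>v. ux x t \<bullet> v)) (at x)"
    using sol unfolding classical_solution_def by blast
  have U': "((\<lambda>y. u y t) has_derivative (\<lambda>v. ux x t \<bullet> v)) (at x)" if "(x,t) \<in> cyl 1 0 0" for x t
    using U that by blast
  have grad': "(norm g)\<^sup>2 \<le> B" if "(x,t) \<in> cyl 1 0 0" "u x t > 0"
     "((\<lambda>y. u y t powr q) has_derivative (\<lambda>v. g \<bullet> v)) (at x)" for x t g
    using grad that by blast
  define P where "P = (\<lambda>s::real. y + s *\<^sub>R (z - y))"
  have Pin: "P s \<in> ball 0 1" if "s \<in> {0..1}" for s
  proof -
    have "P s = (1 - s) *\<^sub>R y + s *\<^sub>R z" by (simp add: P_def algebra_simps)
    moreover have "(1 - s) *\<^sub>R y + s *\<^sub>R z \<in> ball 0 1"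
      using convex_ball[of "0::real^'n" 1] y z that unfolding convex_def by auto
    ultimately show ?thesis by simp
  qed
  have PQ: "(P s, t) \<in> cyl 1 0 0" if "s \<in> {0..1}" for s
    using Pin[OF that] t by (simp add: cyl_def)
  have uP0: "u (P s) t \<ge> 0" if "s \<in> {0..1}" for s using nonneg PQ[OF that] by auto
  have ucontP: "continuous_on {0..1} (\<lambda>s. u (P s) t)"
  proof (rule continuous_at_imp_continuous_on, intro ballI)
    fix s :: real assume s: "s \<in> {0..1}"
    have d: "((\<lambda>y. u y t) has_derivative (\<lambda>v. ux (P s) t \<bullet> v)) (at (P s))" by (rule U'[OF PQ[OF s]])
    have "isCont (\<lambda>y. u y t) (P s)" by (rule has_derivative_continuous[OF d])
    moreover have "isCont P s" unfolding P_def by (intro continuous_intros)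
    ultimately show "isCont (\<lambda>s. u (P s) t) s" using isCont_o2[of s P "\<lambda>y. u y t"] by simp
  qed
  define L where "L = (\<lambda>s. u (P s) t powr q)"
  have Lcont: "continuous_on {0..1} L" unfolding L_def
    by (rule continuous_on_powr'[OF ucontP]) (use q uP0 in auto)
  define Zs where "Zs = {s\<in>{0..1}. u (P s) t = 0}"
  have "closed Zs"
  proof -
    have "closed ({0..1} \<inter> (\<lambda>s. u (P s) t) -` {0})"
      by (rule continuous_closed_preimage[OF ucontP]) auto
    thus ?thesis unfolding Zs_def by (simp add: vimage_def Int_def conj_commute)
  qed
  moreover have "bounded Zs"
    by (rule bounded_subset[OF compact_imp_bounded[OF compact_Icc[of 0 1]]]) (auto simp: Zs_def)
  ultimately have cZ: "compact Zs" by (simp add: compact_eq_bounded_closed)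
  obtain s0 where s0: "s0 \<in> {0..1}" "L s0 \<le> L 0" "\<forall>s. s0 < s \<and> s \<le> 1 \<longrightarrow> u (P s) t > 0"
  proof (cases "Zs = {}")
    case True
    show ?thesis
    proof (rule that[of 0])
      show "\<forall>s. 0 < s \<and> s \<le> 1 \<longrightarrow> u (P s) t > 0"
        using True uP0 unfolding Zs_def by (auto simp: less_le)
    qed auto
  next
    case False
    obtain m where m: "m \<in> Zs" "\<forall>s\<in>Zs. s \<le> m" using compact_attains_sup[OF cZ False] by blast
    show ?thesis
    proof (rule that[of m])
      show "m \<in> {0..1}" using m unfolding Zs_def by auto
      show "L m \<le> L 0" using m q uP0[of 0] unfolding Zs_def L_def by auto
      show "\<forall>s. m < s \<and> s \<le> 1 \<longrightarrow> u (P s) t > 0"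
      proof (intro allI impI)
        fix s assume "m < s \<and> s \<le> 1"
        moreover hence "s \<in> {0..1}" using \<open>m \<in> {0..1}\<close> by auto
        ultimately have ms: "m < s" "s \<in> {0..1}" by auto
        have "s \<notin> Zs"
        proof
          assume "s \<in> Zs" hence "s \<le> m" using m(2) by blast
          thus False using ms by simp
        qed
        hence "u (P s) t \<noteq> 0" using ms(2) unfolding Zs_def by blast
        thus "u (P s) t > 0" using uP0[OF ms(2)] by simp
      qed
    qed
  qed
  have "L 1 - L s0 \<le> sqrt B * dist y z"
  proof (cases "s0 = 1")
    case True thus ?thesis using B by simp
  next
    case False
    hence s01: "s0 < 1" using s0 by auto
    have der: "(L has_real_derivative (((q * u (P s) t powr (q - 1)) *\<^sub>R ux (P s) t) \<bullet> (z - y))) (at s)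
              \<and> \<bar>((q * u (P s) t powr (q - 1)) *\<^sub>R ux (P s) t) \<bullet> (z - y)\<bar> \<le> sqrt B * dist y z"
      if s: "s0 < s" "s < 1" for s
    proof
      have sI: "s \<in> {0..1}" using s s0 by auto
      have pos: "u (P s) t > 0" using s0(3) s by auto
      have d: "((\<lambda>y. u y t) has_derivative (\<lambda>v. ux (P s) t \<bullet> v)) (at (P s))" by (rule U'[OF PQ[OF sI]])
      have dp: "((\<lambda>y. u y t powr q) has_derivative (\<lambda>v. ((q * u (P s) t powr (q - 1)) *\<^sub>R ux (P s) t) \<bullet> v)) (at (P s))"
        using powr_comp_deriv[OF d pos] by simp
      hence dp': "((\<lambda>y. u y t powr q) has_derivative (\<lambda>v. ((q * u (P s) t powr (q - 1)) *\<^sub>R ux (P s) t) \<bullet> v)) (at (y + s *\<^sub>R (z - y)))"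
        by (simp add: P_def)
      show "(L has_real_derivative (((q * u (P s) t powr (q - 1)) *\<^sub>R ux (P s) t) \<bullet> (z - y))) (at s)"
        using line_deriv[OF dp'] unfolding L_def P_def by simp
      have "(norm ((q * u (P s) t powr (q - 1)) *\<^sub>R ux (P s) t))\<^sup>2 \<le> B"
        by (rule grad'[OF PQ[OF sI] pos dp])
      hence nb: "norm ((q * u (P s) t powr (q - 1)) *\<^sub>R ux (P s) t) \<le> sqrt B"
        using real_le_rsqrt by blast
      have "\<bar>((q * u (P s) t powr (q - 1)) *\<^sub>R ux (P s) t) \<bullet> (z - y)\<bar>
            \<le> norm ((q * u (P s) t powr (q - 1)) *\<^sub>R ux (P s) t) * norm (z - y)"
        by (rule Cauchy_Schwarz_ineq2)
      also have "\<dots> \<le> sqrt B * norm (z - y)" by (rule mult_right_mono[OF nb]) simp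
      finally show "\<bar>((q * u (P s) t powr (q - 1)) *\<^sub>R ux (P s) t) \<bullet> (z - y)\<bar> \<le> sqrt B * dist y z"
        by (simp add: dist_norm norm_minus_commute)
    qed
    have "continuous_on {s0..1} L" using continuous_on_subset[OF Lcont] s0 by auto
    moreover have "L differentiable (at x)" if "s0 < x" "x < 1" for x
      using der[OF that] real_differentiable_def by blast
    ultimately obtain l \<xi> where mv: "s0 < \<xi>" "\<xi> < 1" "DERIV L \<xi> :> l" "L 1 - L s0 = (1 - s0) * l"
      using MVT[OF s01] by blast
    have "l = ((q * u (P \<xi>) t powr (q - 1)) *\<^sub>R ux (P \<xi>) t) \<bullet> (z - y)"
      using der[OF mv(1,2)] mv(3) DERIV_unique by blast
    hence lb: "l \<le> sqrt B * dist y z" using der[OF mv(1,2)] by linarith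
    have "(1 - s0) * l \<le> sqrt B * dist y z"
    proof (cases "l \<ge> 0")
      case True
      have "(1 - s0) * l \<le> 1 * l" using s0 True by (intro mult_right_mono) auto
      thus ?thesis using lb by simp
    next
      case False
      hence "(1 - s0) * l \<le> 0" using s01 by (simp add: mult_nonneg_nonpos)
      moreover have "0 \<le> sqrt B * dist y z" using B by simp
      ultimately show ?thesis by linarith
    qed
    thus ?thesis using mv(4) by simp
  qed
  moreover have "L 1 = u z t powr q" "L 0 = u y t powr q" by (simp_all add: L_def P_def)
  ultimately show ?thesis using s0(2) by simp
qed



lemma radial_bar:
  fixes \<Phi> \<Phi>1 :: "real \<Rightarrow> real" and xc y :: "real^'n"
  assumes eta: "\<eta> > 0"
    and d1: "\<forall>z. \<bar>z - z0\<bar> < \<eta> \<longrightarrow> (\<Phi> has_real_derivative \<Phi>1 z) (at z)"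
    and d2: "(\<Phi>1 has_real_derivative \<Phi>2) (at z0)"
    and z0: "z0 = \<alpha> + \<tau> * s + \<sigma> * (norm (y - xc))\<^sup>2"
    and ineq: "\<zeta> * (\<Phi>1 z0 * \<tau> - (4 * \<sigma>\<^sup>2 * (norm (y - xc))\<^sup>2 * \<Phi>2 + 2 * real CARD('n) * \<sigma> * \<Phi>1 z0) + F (\<Phi> z0)) < 0"
  shows "\<exists>wt W2 \<eta>. \<eta> > 0 \<and> ((\<lambda>s. \<Phi> (\<alpha> + \<tau> * s + \<sigma> * (norm (y - xc))\<^sup>2)) has_real_derivative wt) (at s) \<and>
          (\<forall>i. \<exists>d1. (\<forall>\<theta>. \<bar>\<theta>\<bar> < \<eta> \<longrightarrow> ((\<lambda>\<theta>. \<Phi> (\<alpha> + \<tau> * s + \<sigma> * (norm (y + \<theta> *\<^sub>R axis i 1 - xc))\<^sup>2)) has_real_derivative d1 \<theta>) (at \<theta>))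
                 \<and> (d1 has_real_derivative W2 i) (at 0)) \<and>
          \<zeta> * (wt - (\<Sum>i\<in>UNIV. W2 i) + F (\<Phi> (\<alpha> + \<tau> * s + \<sigma> * (norm (y - xc))\<^sup>2))) < 0"
proof -
  have "(\<Phi> has_real_derivative \<Phi>1 z0) (at z0)" using d1 eta by simp
  hence td: "((\<lambda>s. \<Phi> (\<alpha> + \<tau> * s + \<sigma> * (norm (y - xc))\<^sup>2)) has_real_derivative \<Phi>1 z0 * \<tau>) (at s)"
    using radial_time[of \<Phi> "\<Phi>1 z0" \<alpha> \<tau> s \<sigma> "(norm (y - xc))\<^sup>2"] z0 by simp
  obtain \<eta>' where E: "\<eta>' > 0" "\<forall>i. \<exists>d. (\<forall>\<theta>. \<bar>\<theta>\<bar> < \<eta>' \<longrightarrow>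
            ((\<lambda>\<theta>. \<Phi> ((\<alpha> + \<tau> * s) + \<sigma> * (norm (y + \<theta> *\<^sub>R axis i 1 - xc))\<^sup>2)) has_real_derivative d \<theta>) (at \<theta>))
          \<and> (d has_real_derivative (4 * \<sigma>\<^sup>2 * ((y - xc) $ i)\<^sup>2 * \<Phi>2 + 2 * \<sigma> * \<Phi>1 z0)) (at 0)"
    using radial_space[OF eta d1 d2, of "\<alpha> + \<tau> * s" \<sigma> y xc] z0 by auto
  show ?thesis
  proof (intro exI conjI)
    show "\<eta>' > 0" by (rule E(1))
    show "((\<lambda>s. \<Phi> (\<alpha> + \<tau> * s + \<sigma> * (norm (y - xc))\<^sup>2)) has_real_derivative \<Phi>1 z0 * \<tau>) (at s)" by (rule td)
    show "\<forall>i. \<exists>d1. (\<forall>\<theta>. \<bar>\<theta>\<bar> < \<eta>' \<longrightarrow> ((\<lambda>\<theta>. \<Phi> (\<alpha> + \<tau> * s + \<sigma> * (norm (y + \<theta> *\<^sub>R axis i 1 - xc))\<^sup>2)) has_real_derivative d1 \<theta>) (at \<theta>))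
                 \<and> (d1 has_real_derivative (\<lambda>i. 4 * \<sigma>\<^sup>2 * ((y - xc) $ i)\<^sup>2 * \<Phi>2 + 2 * \<sigma> * \<Phi>1 z0) i) (at 0)"
      using E(2) by simp
    show "\<zeta> * (\<Phi>1 z0 * \<tau> - (\<Sum>i\<in>UNIV. (\<lambda>i. 4 * \<sigma>\<^sup>2 * ((y - xc) $ i)\<^sup>2 * \<Phi>2 + 2 * \<sigma> * \<Phi>1 z0) i) + F (\<Phi> (\<alpha> + \<tau> * s + \<sigma> * (norm (y - xc))\<^sup>2))) < 0"
      using ineq z0 radial_sum[of \<sigma> y xc \<Phi>2 "\<Phi>1 z0"] by simp
  qed
qed

lemma upow: "0 \<le> (u::real) \<Longrightarrow> p > 0 \<Longrightarrow> (u powr (1/p)) powr p = u"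
  by (simp add: powr_powr)

lemma sqrt_powr: "0 \<le> (z::real) \<Longrightarrow> 0 \<le> k \<Longrightarrow> (k * sqrt z) powr p = k powr p * z powr (p/2)"
  by (simp add: powr_mult powr_half_sqrt[symmetric] powr_powr)

lemma forward:
  fixes u :: "real^'n \<Rightarrow> real \<Rightarrow> real"
  assumes g: "0 \<le> \<gamma>" "\<gamma> \<le> 1" and p: "p = 2 / (2 - \<gamma>)" and adm: "admissible_h h"
    and e: "\<epsilon> > 0"
    and sol: "classical_solution (f_eps h \<gamma> p \<epsilon>) (cyl 1 0 0) u"
    and nonneg: "\<forall>(x,t)\<in>cyl 1 0 0. u x t \<ge> 0"
    and vb: "\<forall>(x,t)\<in>cyl 1 0 0. u x t powr (1/p) \<le> L"
    and lip: "\<forall>y z t. y \<in> ball 0 1 \<longrightarrow> z \<in> ball 0 1 \<longrightarrow> -1 < t \<longrightarrow> t < 1 \<longrightarrow>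
                 u z t powr (1/p) \<le> u y t powr (1/p) + L * dist y z"
    and L: "L \<ge> 0" and th: "\<theta> > 0"
    and x0: "norm x0 < 1/2" and t0: "-1/4 < t0" "t0 < 1/4" and r: "0 < r" "r < 1/4"
    and ux0: "u x0 t0 \<le> \<theta> * \<epsilon> powr p"
    and x: "dist x0 x < r" and t: "t0 \<le> t" "t < t0 + r\<^sup>2"
  shows "u x t \<le> (4 * (\<theta> powr (1/p) + L) + 1) powr p * (2 * real CARD('n) + 2) powr (p/2) * (\<epsilon>\<^sup>2 + r\<^sup>2) powr (p/2)"
proof -
  have den: "1 \<le> 2 - \<gamma>" "2 - \<gamma> \<le> 2" using g by auto
  have p1: "1 \<le> p" "p \<le> 2" unfolding p using den by (auto simp: le_divide_eq divide_le_eq)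
  hence ppos: "p > 0" by simp
  define n where "n = real CARD('n)"
  define lam where "lam = 2 * n + 1"
  define k where "k = 4 * (\<theta> powr (1/p) + L) + 1"
  define K where "K = k powr p"
  have kpos: "k > 0" using L by (simp add: k_def add_nonneg_pos)
  have Kpos: "K > 0" using kpos by (simp add: K_def)
  have n1: "n \<ge> 1" by (simp add: n_def)
  define \<Psi> where "\<Psi> = (\<lambda>z::real. K * z powr (p/2))"
  define \<Psi>1 where "\<Psi>1 = (\<lambda>z::real. K * ((p/2) * z powr (p/2 - 1)))"
  define \<alpha> where "\<alpha> = \<epsilon>\<^sup>2 - lam * t0"
  define w where "w = (\<lambda>(y::real^'n) s. \<Psi> (\<alpha> + lam * s + 1 * (norm (y - x0))\<^sup>2))"
  define T where "T = t0 + r\<^sup>2"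
  have zpos: "\<alpha> + lam * s + 1 * (norm (y - x0))\<^sup>2 \<ge> \<epsilon>\<^sup>2" if "t0 \<le> s" for s and y :: "real^'n"
  proof -
    have "lam * t0 \<le> lam * s" using that n1 by (intro mult_left_mono) (auto simp: lam_def)
    moreover have "0 \<le> (norm (y - x0))\<^sup>2" by simp
    ultimately show ?thesis unfolding \<alpha>_def by linarith
  qed
  have zpos0: "\<alpha> + lam * s \<ge> \<epsilon>\<^sup>2" if "t0 \<le> s" for s
  proof -
    have "lam * t0 \<le> lam * s" using that n1 by (intro mult_left_mono) (auto simp: lam_def)
    thus ?thesis unfolding \<alpha>_def by linarith
  qed
  have Psi_eq: "\<Psi> z = (k * sqrt z) powr p" if "z \<ge> 0" for z
    using sqrt_powr[OF that, of k p] kpos by (simp add: \<Psi>_def K_def)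
  have v_def_eq: "u y s = (u y s powr (1/p)) powr p" if "(y, s) \<in> cyl 1 0 0" for y s
    using upow[of "u y s" p] nonneg that ppos by auto
  have lessw: "u y s < w y s" if Q: "(y, s) \<in> cyl 1 0 0" and ts: "t0 \<le> s"
      and vk: "u y s powr (1/p) < k * sqrt (\<alpha> + lam * s + 1 * (norm (y - x0))\<^sup>2)" for y s
  proof -
    have z0: "\<alpha> + lam * s + 1 * (norm (y - x0))\<^sup>2 \<ge> 0" using zpos[OF ts, of y] by (meson order_trans zero_le_power2)
    have "(u y s powr (1/p)) powr p < (k * sqrt (\<alpha> + lam * s + 1 * (norm (y - x0))\<^sup>2)) powr p"
      by (rule powr_less_mono2[OF ppos _ vk]) simp
    thus ?thesis using v_def_eq[OF Q] Psi_eq[OF z0] by (simp add: w_def)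
  qed
  have r2: "r\<^sup>2 < 1/16"
  proof -
    have "r\<^sup>2 < (1/4)\<^sup>2" by (rule power_strict_mono) (use r in auto)
    thus ?thesis by (simp add: power2_eq_square)
  qed
  have sub: "cball x0 (1/4) \<times> {t0..T} \<subseteq> cyl 1 0 0"
  proof
    fix q assume "q \<in> cball x0 (1/4) \<times> {t0..T}"
    then obtain y s where q: "q = (y, s)" "dist x0 y \<le> 1/4" "t0 \<le> s" "s \<le> T" by auto
    have "norm y \<le> norm x0 + dist x0 y"
      using norm_triangle_ineq[of x0 "y - x0"] by (simp add: dist_norm norm_minus_commute)
    hence "norm y < 1" using x0 q by simp
    moreover have "s < 1" "-1 < s" using q t0 r2 by (auto simp: T_def)
    ultimately show "q \<in> cyl 1 0 0" using q by (simp add: cyl_def)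
  qed
  have inQ: "(y, s) \<in> cyl 1 0 0" if "y \<in> cball x0 (1/4)" "s \<in> {t0..T}" for y s using sub that by blast
  have x0Q: "(x0, t0) \<in> cyl 1 0 0" using inQ[of x0 t0] by (simp add: T_def)
  have vx0: "u x0 t0 powr (1/p) \<le> \<theta> powr (1/p) * \<epsilon>"
  proof -
    have "u x0 t0 powr (1/p) \<le> (\<theta> * \<epsilon> powr p) powr (1/p)"
      using nonneg x0Q ux0 ppos by (intro powr_mono2) auto
    also have "\<dots> = \<theta> powr (1/p) * \<epsilon>" using ppos e by (simp add: powr_mult powr_powr)
    finally show ?thesis .
  qed
  have mp: "\<forall>y\<in>cball x0 (1/4). \<forall>s\<in>{t0..T}. (-1) * (w y s - u y s) < 0"
  proof (rule max_principle[OF sol sub, of "-1" w])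
    show "(-1::real) = 1 \<or> (-1::real) = -1" by simp
    show "continuous_on (cball x0 (1/4) \<times> {t0..T}) (\<lambda>(y,s). w y s)"
    proof -
      have "continuous_on (cball x0 (1/4) \<times> {t0..T}) (\<lambda>q. K * (\<alpha> + lam * snd q + 1 * (norm (fst q - x0))\<^sup>2) powr (p/2))"
      proof (intro continuous_intros)
        show "\<forall>q\<in>cball x0 (1/4) \<times> {t0..T}. \<alpha> + lam * snd q + 1 * (norm (fst q - x0))\<^sup>2 \<noteq> 0"
        proof
          fix q :: "(real^'n) \<times> real" assume "q \<in> cball x0 (1/4) \<times> {t0..T}"
          hence "t0 \<le> snd q" by auto
          hence "\<epsilon>\<^sup>2 \<le> \<alpha> + lam * snd q + 1 * (norm (fst q - x0))\<^sup>2" by (rule zpos)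
          moreover have "\<epsilon>\<^sup>2 > 0" using e by simp
          ultimately show "\<alpha> + lam * snd q + 1 * (norm (fst q - x0))\<^sup>2 \<noteq> 0" by linarith
        qed
      qed
      thus ?thesis by (simp add: w_def \<Psi>_def case_prod_beta)
    qed
    show "\<forall>y\<in>cball x0 (1/4). (-1) * (w y t0 - u y t0) < 0"
    proof
      fix y assume y: "y \<in> cball x0 (1/4)"
      define d where "d = dist x0 y"
      have yQ: "(y, t0) \<in> cyl 1 0 0" using inQ[OF y, of t0] by (simp add: T_def)
      have "u y t0 powr (1/p) \<le> u x0 t0 powr (1/p) + L * dist x0 y"
        using lip yQ x0Q by (auto simp: cyl_def)
      also have "\<dots> \<le> \<theta> powr (1/p) * \<epsilon> + L * d" using vx0 by (simp add: d_def)
      also have "\<dots> \<le> \<theta> powr (1/p) * sqrt (\<epsilon>\<^sup>2 + d\<^sup>2) + L * sqrt (\<epsilon>\<^sup>2 + d\<^sup>2)"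
        using L e by (intro add_mono mult_left_mono) (auto intro: real_le_rsqrt simp: d_def)
      also have "\<dots> < k * sqrt (\<epsilon>\<^sup>2 + d\<^sup>2)"
      proof -
        define S where "S = sqrt (\<epsilon>\<^sup>2 + d\<^sup>2)"
        have sp: "S > 0" using e unfolding S_def by (simp add: add_pos_nonneg)
        have a1: "0 \<le> \<theta> powr (1/p) * S" "0 \<le> L * S" using L sp by auto
        have "k * S = 4 * (\<theta> powr (1/p) * S) + 4 * (L * S) + S" by (simp add: k_def algebra_simps)
        thus ?thesis using a1 sp unfolding S_def[symmetric] by linarith
      qed
      also have "\<epsilon>\<^sup>2 + d\<^sup>2 = \<alpha> + lam * t0 + 1 * (norm (y - x0))\<^sup>2"
        by (simp add: \<alpha>_def d_def dist_norm norm_minus_commute)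
      finally have "u y t0 < w y t0" by (rule lessw[OF yQ order_refl])
      thus "(-1) * (w y t0 - u y t0) < 0" by simp
    qed
    show "\<forall>y s. dist x0 y = 1/4 \<and> s \<in> {t0..T} \<longrightarrow> (-1) * (w y s - u y s) < 0"
    proof (intro allI impI)
      fix y s assume ys: "dist x0 y = 1/4 \<and> s \<in> {t0..T}"
      hence yQ: "(y, s) \<in> cyl 1 0 0" using inQ by auto
      have "u y s powr (1/p) \<le> L" using vb yQ by auto
      also have "L < k * (1/4)"
      proof -
        have "0 \<le> \<theta> powr (1/p)" by simp
        moreover have "k * (1/4) = \<theta> powr (1/p) + L + 1/4" by (simp add: k_def algebra_simps)
        ultimately show ?thesis by linarith
      qed
      also have "k * (1/4) \<le> k * sqrt (\<alpha> + lam * s + 1 * (norm (y - x0))\<^sup>2)"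
      proof (intro mult_left_mono)
        have nN: "norm (y - x0) = 1/4" using ys by (simp add: dist_norm norm_minus_commute)
        have aP: "\<alpha> + lam * s \<ge> 0" using zpos0[of s] ys by (smt (verit) zero_le_power2 atLeastAtMost_iff)
        have "(1/4)\<^sup>2 \<le> \<alpha> + lam * s + 1 * (norm (y - x0))\<^sup>2" unfolding nN using aP by simp
        then show "1/4 \<le> sqrt (\<alpha> + lam * s + 1 * (norm (y - x0))\<^sup>2)" by (rule real_le_rsqrt)
      qed (use kpos in simp)
      finally have vk: "u y s powr (1/p) < k * sqrt (\<alpha> + lam * s + 1 * (norm (y - x0))\<^sup>2)" .
      have "t0 \<le> s" using ys by auto
      hence "u y s < w y s" by (rule lessw[OF yQ _ vk])
      thus "(-1) * (w y s - u y s) < 0" by simp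
    qed
    show "\<forall>y s. y \<in> ball x0 (1/4) \<and> t0 < s \<and> s \<le> T \<and> w y s = u y s \<longrightarrow>
       (\<exists>wt W2 \<eta>. \<eta> > 0 \<and> ((\<lambda>s. w y s) has_real_derivative wt) (at s) \<and>
          (\<forall>i. \<exists>d1. (\<forall>\<theta>. \<bar>\<theta>\<bar> < \<eta> \<longrightarrow> ((\<lambda>\<theta>. w (y + \<theta> *\<^sub>R axis i 1) s) has_real_derivative d1 \<theta>) (at \<theta>))
                 \<and> (d1 has_real_derivative W2 i) (at 0)) \<and>
          (-1) * (wt - (\<Sum>i\<in>UNIV. W2 i) + f_eps h \<gamma> p \<epsilon> (w y s)) < 0)"
    proof (intro allI impI)
      fix y s assume ys: "y \<in> ball x0 (1/4) \<and> t0 < s \<and> s \<le> T \<and> w y s = u y s"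
      define z0 where "z0 = \<alpha> + lam * s + 1 * (norm (y - x0))\<^sup>2"
      have z0pos: "z0 > 0" using zpos[of s y] ys e unfolding z0_def
        by (smt (verit) zero_less_power2)
      have d1: "\<forall>z. \<bar>z - z0\<bar> < z0 \<longrightarrow> (\<Psi> has_real_derivative \<Psi>1 z) (at z)"
      proof (intro allI impI)
        fix z assume "\<bar>z - z0\<bar> < z0" hence zp: "z > 0" by linarith
        show "(\<Psi> has_real_derivative \<Psi>1 z) (at z)"
          unfolding \<Psi>_def \<Psi>1_def using has_real_derivative_powr[OF zp, of "p/2"] zp
          by (auto intro!: derivative_eq_intros)
      qed
      have d2: "(\<Psi>1 has_real_derivative K * ((p/2) * ((p/2 - 1) * z0 powr (p/2 - 1 - 1)))) (at z0)"
        unfolding \<Psi>1_def using has_real_derivative_powr[OF z0pos, of "p/2 - 1"] z0pos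
        by (auto intro!: derivative_eq_intros)
      define \<Psi>2 where "\<Psi>2 = K * ((p/2) * ((p/2 - 1) * z0 powr (p/2 - 1 - 1)))"
      have P2: "\<Psi>2 \<le> 0" unfolding \<Psi>2_def using Kpos ppos p1
        by (intro mult_nonneg_nonpos mult_nonpos_nonneg) auto
      have P1: "\<Psi>1 z0 > 0" unfolding \<Psi>1_def using Kpos ppos z0pos by simp
      have F0: "f_eps h \<gamma> p \<epsilon> (\<Psi> z0) \<ge> 0" by (rule f_eps_nonneg[OF adm g(1)])
      have "4 * 1\<^sup>2 * (norm (y - x0))\<^sup>2 * \<Psi>2 \<le> 0" using P2 by (simp add: mult_nonneg_nonpos)
      hence ineq: "(-1) * (\<Psi>1 z0 * lam - (4 * 1\<^sup>2 * (norm (y - x0))\<^sup>2 * \<Psi>2 + 2 * real CARD('n) * 1 * \<Psi>1 z0) + f_eps h \<gamma> p \<epsilon> (\<Psi> z0)) < 0"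
        using P1 F0 by (simp add: lam_def n_def algebra_simps)
      have "\<exists>wt W2 \<eta>. \<eta> > 0 \<and> ((\<lambda>s. \<Psi> (\<alpha> + lam * s + 1 * (norm (y - x0))\<^sup>2)) has_real_derivative wt) (at s) \<and>
          (\<forall>i. \<exists>d1. (\<forall>\<theta>. \<bar>\<theta>\<bar> < \<eta> \<longrightarrow> ((\<lambda>\<theta>. \<Psi> (\<alpha> + lam * s + 1 * (norm (y + \<theta> *\<^sub>R axis i 1 - x0))\<^sup>2)) has_real_derivative d1 \<theta>) (at \<theta>))
                 \<and> (d1 has_real_derivative W2 i) (at 0)) \<and>
          (-1) * (wt - (\<Sum>i\<in>UNIV. W2 i) + f_eps h \<gamma> p \<epsilon> (\<Psi> (\<alpha> + lam * s + 1 * (norm (y - x0))\<^sup>2))) < 0"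
        by (rule radial_bar[OF z0pos d1 d2[folded \<Psi>2_def] z0_def]) (use ineq in \<open>simp add: z0_def\<close>)
      thus "\<exists>wt W2 \<eta>. \<eta> > 0 \<and> ((\<lambda>s. w y s) has_real_derivative wt) (at s) \<and>
          (\<forall>i. \<exists>d1. (\<forall>\<theta>. \<bar>\<theta>\<bar> < \<eta> \<longrightarrow> ((\<lambda>\<theta>. w (y + \<theta> *\<^sub>R axis i 1) s) has_real_derivative d1 \<theta>) (at \<theta>))
                 \<and> (d1 has_real_derivative W2 i) (at 0)) \<and>
          (-1) * (wt - (\<Sum>i\<in>UNIV. W2 i) + f_eps h \<gamma> p \<epsilon> (w y s)) < 0"
        by (simp add: w_def)
    qed
  qed
  have xin: "x \<in> cball x0 (1/4)" using x r by simp
  have tin: "t \<in> {t0..T}" using t by (simp add: T_def)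
  have "u x t < w x t" using mp xin tin by force
  also have "w x t \<le> K * ((lam + 1) * (\<epsilon>\<^sup>2 + r\<^sup>2)) powr (p/2)"
  proof -
    have "\<alpha> + lam * t + 1 * (norm (x - x0))\<^sup>2 = \<epsilon>\<^sup>2 + lam * (t - t0) + (dist x0 x)\<^sup>2"
      by (simp add: \<alpha>_def algebra_simps dist_norm norm_minus_commute)
    also have "\<dots> \<le> \<epsilon>\<^sup>2 + lam * r\<^sup>2 + r\<^sup>2"
    proof -
      have "lam * (t - t0) \<le> lam * r\<^sup>2" using t n1 by (intro mult_left_mono) (auto simp: lam_def)
      moreover have "(dist x0 x)\<^sup>2 \<le> r\<^sup>2" using x by (intro power_mono) auto
      ultimately show ?thesis by simp
    qed
    also have "\<dots> \<le> (lam + 1) * (\<epsilon>\<^sup>2 + r\<^sup>2)" using n1 by (simp add: lam_def algebra_simps)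
    finally have le: "\<alpha> + lam * t + 1 * (norm (x - x0))\<^sup>2 \<le> (lam + 1) * (\<epsilon>\<^sup>2 + r\<^sup>2)" .
    have "(\<alpha> + lam * t + 1 * (norm (x - x0))\<^sup>2) powr (p/2) \<le> ((lam + 1) * (\<epsilon>\<^sup>2 + r\<^sup>2)) powr (p/2)"
      using zpos[OF t(1), of x] e ppos le by (intro powr_mono2) (auto intro: order_trans[OF zero_le_power2])
    thus ?thesis using Kpos by (simp add: w_def \<Psi>_def)
  qed
  also have "\<dots> = K * (lam + 1) powr (p/2) * (\<epsilon>\<^sup>2 + r\<^sup>2) powr (p/2)" by (simp add: powr_mult)
  finally show ?thesis by (simp add: K_def k_def lam_def n_def algebra_simps)
qed



definition phi :: "real \<Rightarrow> real \<Rightarrow> real \<Rightarrow> real \<Rightarrow> real" where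
  "phi A B p S = A * ((1 + S) powr p - 1) + B * (2 * S - 1 + exp (- S))"
definition phi1 :: "real \<Rightarrow> real \<Rightarrow> real \<Rightarrow> real \<Rightarrow> real" where
  "phi1 A B p S = A * (p * (1 + S) powr (p - 1)) + B * (2 - exp (- S))"
definition phi2 :: "real \<Rightarrow> real \<Rightarrow> real \<Rightarrow> real \<Rightarrow> real" where
  "phi2 A B p S = A * (p * ((p - 1) * (1 + S) powr (p - 1 - 1))) + B * exp (- S)"

lemma phi_deriv:
  assumes "S > -1"
  shows "(phi A B p has_real_derivative phi1 A B p S) (at S)"
proof -
  have pos: "1 + S > 0" using assms by simp
  have "((\<lambda>S. (1 + S) powr p) has_real_derivative p * (1 + S) powr (p - 1) * 1) (at S)"
    by (rule DERIV_chain2[where f = "\<lambda>z. z powr p" and g = "\<lambda>S. 1 + S" and x = S, OF has_real_derivative_powr[OF pos]])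
       (use pos in \<open>auto intro!: derivative_eq_intros\<close>)
  thus ?thesis unfolding phi_def[abs_def] phi1_def using pos
    by (auto intro!: derivative_eq_intros)
qed

lemma phi1_deriv:
  assumes "S > -1"
  shows "(phi1 A B p has_real_derivative phi2 A B p S) (at S)"
proof -
  have pos: "1 + S > 0" using assms by simp
  have "((\<lambda>S. (1 + S) powr (p - 1)) has_real_derivative (p - 1) * (1 + S) powr (p - 1 - 1) * 1) (at S)"
    by (rule DERIV_chain2[where f = "\<lambda>z. z powr (p - 1)" and g = "\<lambda>S. 1 + S" and x = S, OF has_real_derivative_powr[OF pos]])
       (use pos in \<open>auto intro!: derivative_eq_intros\<close>)
  thus ?thesis unfolding phi1_def[abs_def] phi2_def using pos
    by (auto intro!: derivative_eq_intros)
qed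

lemma one_plus_powr_ge:
  fixes p S :: real
  assumes "p \<ge> 1" "S \<ge> 0"
  shows "(1 + S) powr p \<ge> 1 + S powr p"
proof -
  have "(1 + S) * (1 + S) powr (p - 1) = (1 + S) powr (1 + (p - 1))"
    by (rule powr_mult_base) (use assms in simp)
  hence "(1 + S) powr p = (1 + S) * (1 + S) powr (p - 1)" by simp
  also have "\<dots> = (1 + S) powr (p - 1) + S * (1 + S) powr (p - 1)" by (simp add: algebra_simps)
  also have "\<dots> \<ge> 1 + S * S powr (p - 1)"
  proof (rule add_mono)
    show "1 \<le> (1 + S) powr (p - 1)" using assms by (intro ge_one_powr_ge_zero) auto
    show "S * S powr (p - 1) \<le> S * (1 + S) powr (p - 1)"
      using assms by (intro mult_left_mono powr_mono2) auto
  qed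
  also have "S * S powr (p - 1) = S powr p"
  proof (cases "S = 0")
    case True thus ?thesis using assms by simp
  next
    case False
    have "S * S powr (p - 1) = S powr (1 + (p - 1))" by (rule powr_mult_base) (use assms in simp)
    thus ?thesis by simp
  qed
  finally show ?thesis .
qed

lemma phi_ge:
  assumes "p \<ge> 1" "S \<ge> 0" "A \<ge> 0" "B \<ge> 0"
  shows "phi A B p S \<ge> A * S powr p"
proof -
  have "A * S powr p \<le> A * ((1 + S) powr p - 1)"
    using one_plus_powr_ge[OF assms(1,2)] assms by (intro mult_left_mono) auto
  moreover have "0 \<le> B * (2 * S - 1 + exp (- S))"
  proof -
    have "1 + (- S) \<le> exp (- S)" by (rule exp_ge_add_one_self)
    thus ?thesis using assms by (intro mult_nonneg_nonneg) auto
  qed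
  ultimately show ?thesis unfolding phi_def by linarith
qed

lemma phi_neg:
  assumes "p > 0" "-1/2 \<le> S" "S < 0" "A > 0" "B > 0"
  shows "phi A B p S < 0"
proof -
  have "(1 + S) powr p < 1 powr p"
    using assms by (intro powr_less_mono2) auto
  hence a: "A * ((1 + S) powr p - 1) < 0" using assms by (simp add: mult_pos_neg)
  have "exp (- S) \<le> 1 + (- S) + (- S)\<^sup>2" using assms by (intro exp_bound) auto
  moreover have "(- S)\<^sup>2 < - S"
  proof -
    have "(- S) * (- S) < (- S) * 1" using assms by (intro mult_strict_left_mono) auto
    thus ?thesis by (simp add: power2_eq_square)
  qed
  ultimately have "2 * S - 1 + exp (- S) < 0" by simp
  hence "B * (2 * S - 1 + exp (- S)) < 0" using assms by (simp add: mult_pos_neg)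
  thus ?thesis using a unfolding phi_def by simp
qed

lemma phi_le:
  assumes "S \<ge> 0" "A \<ge> 0" "B \<ge> 0"
  shows "phi A B p S \<le> A * (1 + S) powr p + 2 * B * S"
proof -
  have "exp (- S) \<le> 1" using assms by simp
  hence "B * (2 * S - 1 + exp (- S)) \<le> B * (2 * S)" using assms by (intro mult_left_mono) auto
  moreover have "A * ((1 + S) powr p - 1) \<le> A * (1 + S) powr p" using assms by (simp add: algebra_simps)
  ultimately show ?thesis unfolding phi_def by simp
qed

lemma phi1_ge:
  assumes "p \<ge> 1" "S \<ge> 0" "A \<ge> 0" "B \<ge> 0"
  shows "phi1 A B p S \<ge> A * S powr (p - 1)"
proof -
  have "S powr (p - 1) \<le> (1 + S) powr (p - 1)" using assms by (intro powr_mono2) auto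
  also have "\<dots> \<le> p * (1 + S) powr (p - 1)" using assms by (simp add: mult_le_cancel_right1)
  finally have "A * S powr (p - 1) \<le> A * (p * (1 + S) powr (p - 1))" using assms by (intro mult_left_mono) auto
  moreover have "0 \<le> B * (2 - exp (- S))"
  proof -
    have "exp (- S) \<le> 1" using assms by simp
    hence "0 \<le> 2 - exp (- S)" by linarith
    thus ?thesis using assms by simp
  qed
  ultimately show ?thesis unfolding phi1_def by linarith
qed

lemma phi1_pos:
  assumes "p \<ge> 1" "S \<ge> 0" "A > 0" "B \<ge> 0"
  shows "phi1 A B p S > 0"
proof -
  have "(1 + S) powr (p - 1) > 0" using assms by simp
  hence "A * (p * (1 + S) powr (p - 1)) > 0" using assms by simp
  moreover have "0 \<le> B * (2 - exp (- S))"
  proof -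
    have "exp (- S) \<le> 1" using assms by simp
    hence "0 \<le> 2 - exp (- S)" by linarith
    thus ?thesis using assms by simp
  qed
  ultimately show ?thesis unfolding phi1_def by linarith
qed

lemma phi2_nonneg:
  assumes "p \<ge> 1" "S \<ge> 0" "A \<ge> 0" "B \<ge> 0"
  shows "phi2 A B p S \<ge> 0"
  unfolding phi2_def using assms by (intro add_nonneg_nonneg mult_nonneg_nonneg) auto

lemma exp_m1: "exp (-1::real) \<ge> 1/3"
proof -
  have "exp (1::real) \<le> 1 + 1 + 1\<^sup>2" by (rule exp_bound) auto
  hence "exp (1::real) \<le> 3" by simp
  thus ?thesis by (simp add: exp_minus field_simps)
qed

lemma k1_big:
  assumes g: "0 \<le> \<gamma>" "\<gamma> \<le> 1" and A: "A \<ge> 1" and S: "S \<ge> 0" and ph: "phi_v \<ge> A * S powr p"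
    and p: "p = 2 / (2 - \<gamma>)" and big: "A * S powr p > 1"
  shows "k1 M \<gamma> phi_v \<le> \<gamma> * S powr (p - 2)"
proof -
  have pv: "phi_v > 1" using less_le_trans[OF big ph] .
  have k: "k1 M \<gamma> phi_v = \<gamma> * phi_v powr (\<gamma> - 1)" using pv by (simp add: k1_def)
  have a: "phi_v powr (\<gamma> - 1) \<le> (A * S powr p) powr (\<gamma> - 1)"
    using g big ph by (intro powr_mono2') auto
  have pg: "p * (\<gamma> - 1) = p - 2" using g p by (simp add: field_simps)
  have b: "(A * S powr p) powr (\<gamma> - 1) = A powr (\<gamma> - 1) * S powr (p - 2)"
    by (simp add: powr_mult powr_powr pg)
  have c: "A powr (\<gamma> - 1) \<le> 1" using powr_mono[of "\<gamma> - 1" 0 A] A g by simp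
  have "phi_v powr (\<gamma> - 1) \<le> S powr (p - 2)"
  proof -
    have "A powr (\<gamma> - 1) * S powr (p - 2) \<le> 1 * S powr (p - 2)" using c by (intro mult_right_mono) auto
    thus ?thesis using a b by simp
  qed
  thus ?thesis unfolding k using g by (intro mult_left_mono) auto
qed

lemma phi2_ge_k1:
  assumes g: "0 \<le> \<gamma>" "\<gamma> \<le> 1" and p: "p = 2 / (2 - \<gamma>)" and A: "A \<ge> 4"
    and B: "B \<ge> 3 * (2 * M + 1)" and M: "M \<ge> 0" and S: "S \<ge> 0"
  shows "phi2 A B p S \<ge> k1 M \<gamma> (phi A B p S)"
proof -
  have den: "1 \<le> 2 - \<gamma>" "2 - \<gamma> \<le> 2" using g by auto
  have p1: "1 \<le> p" "p \<le> 2" unfolding p using den by (auto simp: le_divide_eq divide_le_eq)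
  have t1: "0 \<le> A * (p * ((p - 1) * (1 + S) powr (p - 1 - 1)))"
    using A p1 S by (intro mult_nonneg_nonneg) auto
  show ?thesis
  proof (cases "S \<le> 1")
    case True
    have "exp (-1) \<le> exp (- S)" using True by simp
    hence "B * exp (-1) \<le> B * exp (- S)" using B M by (intro mult_left_mono) auto
    moreover have "B / 3 \<le> B * exp (-1)" using exp_m1 B M by (simp add: mult_left_mono[of "1/3" "exp (-1)" B, simplified])
    ultimately have "B / 3 \<le> B * exp (- S)" by linarith
    moreover have "2 * M + 1 \<le> B / 3" using B by simp
    moreover have "B * exp (- S) \<le> phi2 A B p S" using t1 unfolding phi2_def by simp
    ultimately have "2 * M + 1 \<le> phi2 A B p S" by linarith
    moreover have "k1 M \<gamma> (phi A B p S) \<le> 2 * M + 1"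
    proof (cases "phi A B p S \<le> 1")
      case True thus ?thesis by (simp add: k1_def)
    next
      case False
      hence "phi A B p S powr (\<gamma> - 1) \<le> phi A B p S powr 0" using g by (intro powr_mono) auto
      hence "phi A B p S powr (\<gamma> - 1) \<le> 1" using False by simp
      hence "\<gamma> * phi A B p S powr (\<gamma> - 1) \<le> 1" using g by (meson mult_left_le_one_le powr_ge_zero order_trans)
      thus ?thesis using False M by (simp add: k1_def)
    qed
    ultimately show ?thesis by linarith
  next
    case False
    hence S1: "S > 1" by simp
    have Sp: "S powr p \<ge> 1" using S1 p1 by (intro ge_one_powr_ge_zero) auto
    have big: "A * S powr p > 1"
    proof -
      have "4 * 1 \<le> A * S powr p" using A Sp by (intro mult_mono) auto
      thus ?thesis by simp
    qed
    have kb: "k1 M \<gamma> (phi A B p S) \<le> \<gamma> * S powr (p - 2)"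
      by (rule k1_big[OF g _ _ phi_ge[OF p1(1) _ _ _] p big]) (use A S B M in auto)
    have X: "(1 + S) powr (p - 2) \<ge> (2 * S) powr (p - 2)" using p1 S1 by (intro powr_mono2') auto
    have two: "2 powr (p - 2) \<ge> (2::real) powr (-1)" using p1 by (intro powr_mono) auto
    have Y: "(2 * S) powr (p - 2) \<ge> (1/2) * S powr (p - 2)"
    proof -
      have "(2 * S) powr (p - 2) = 2 powr (p - 2) * S powr (p - 2)" by (simp add: powr_mult)
      moreover have "(1/2) * S powr (p - 2) \<le> 2 powr (p - 2) * S powr (p - 2)"
        using two by (intro mult_right_mono) (auto simp: powr_minus)
      ultimately show ?thesis by simp
    qed
    have pm1: "p - 1 \<ge> \<gamma> / 2"
    proof -
      have "p - 1 = \<gamma> / (2 - \<gamma>)" using den by (simp add: p field_simps)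
      moreover have "\<gamma> / 2 \<le> \<gamma> / (2 - \<gamma>)" using g den by (intro divide_left_mono) auto
      ultimately show ?thesis by simp
    qed
    have XY: "(1/2) * S powr (p - 2) \<le> (1 + S) powr (p - 2)" using X Y by linarith
    have H: "(\<gamma> / 2) * ((1/2) * S powr (p - 2)) \<le> (p - 1) * (1 + S) powr (p - 2)"
      by (rule mult_mono[OF pm1 XY]) (use p1 in auto)
    have c0: "0 \<le> (\<gamma> / 2) * ((1/2) * S powr (p - 2))" using g by simp
    have "1 * ((\<gamma> / 2) * ((1/2) * S powr (p - 2))) \<le> p * ((p - 1) * (1 + S) powr (p - 2))"
      by (rule mult_mono[OF p1(1) H]) (use p1 c0 in auto)
    hence "A * (1 * ((\<gamma> / 2) * ((1/2) * S powr (p - 2)))) \<le> A * (p * ((p - 1) * (1 + S) powr (p - 2)))"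
      using A by (intro mult_left_mono) auto
    moreover have "\<gamma> * S powr (p - 2) \<le> A * (1 * ((\<gamma> / 2) * ((1/2) * S powr (p - 2))))"
    proof -
      have "A * (1 * ((\<gamma> / 2) * ((1/2) * S powr (p - 2)))) = (A / 4) * (\<gamma> * S powr (p - 2))" by simp
      moreover have "1 * (\<gamma> * S powr (p - 2)) \<le> (A / 4) * (\<gamma> * S powr (p - 2))"
        using A g by (intro mult_right_mono) auto
      ultimately show ?thesis by simp
    qed
    moreover have "0 \<le> B * exp (- S)" using B M by simp
    ultimately have "\<gamma> * S powr (p - 2) \<le> phi2 A B p S" unfolding phi2_def by (simp add: diff_diff_eq)
    thus ?thesis using kb by linarith
  qed
qed



lemma bw_core:
  fixes \<epsilon> \<rho> N P1 P2 k F c n :: real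
  assumes e: "\<epsilon> > 0" and rho: "\<rho> > 0" and P1: "P1 > 0" and P2: "P2 \<ge> 0" and k: "k \<ge> 0"
    and c: "c = 2 * n + 1"
    and outer: "N \<ge> \<rho>/2 \<Longrightarrow> P2 \<ge> k"
    and inner: "N < \<rho>/2 \<Longrightarrow> \<rho> * \<epsilon> * P1 > \<rho>\<^sup>2 * k"
    and Fb: "F \<le> \<epsilon> powr (p - 2) * k"
    and N: "N \<ge> 0"
  shows "(\<epsilon> powr p * (P1 * (1 / (\<rho> * \<epsilon>)))) * (- c)
         - (4 * (-1)\<^sup>2 * N\<^sup>2 * (\<epsilon> powr p * (P2 * (1 / (\<rho> * \<epsilon>)) * (1 / (\<rho> * \<epsilon>))))
            + 2 * n * (-1) * (\<epsilon> powr p * (P1 * (1 / (\<rho> * \<epsilon>))))) + F < 0"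
proof -
  define K where "K = \<epsilon> powr p / (\<rho>\<^sup>2 * \<epsilon>\<^sup>2)"
  have Kpos: "K > 0" using e rho by (simp add: K_def)
  have ep2: "\<epsilon> powr (p - 2) = K * \<rho>\<^sup>2"
  proof -
    have "\<epsilon> powr (p - 2) = \<epsilon> powr p / \<epsilon> powr 2" by (rule powr_diff)
    also have "\<epsilon> powr 2 = \<epsilon>\<^sup>2" using e by simp
    finally show ?thesis using rho by (simp add: K_def field_simps)
  qed
  have key: "\<rho> * \<epsilon> * P1 + 4 * N\<^sup>2 * P2 > \<rho>\<^sup>2 * k"
  proof (cases "N \<ge> \<rho>/2")
    case True
    have "\<rho>\<^sup>2 \<le> 4 * N\<^sup>2"
    proof -
      have "(\<rho>/2)\<^sup>2 \<le> N\<^sup>2" using True rho by (intro power_mono) auto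
      thus ?thesis by (simp add: power2_eq_square)
    qed
    hence "\<rho>\<^sup>2 * k \<le> 4 * N\<^sup>2 * P2" using outer[OF True] k by (intro mult_mono) auto
    moreover have "\<rho> * \<epsilon> * P1 > 0" using rho e P1 by simp
    ultimately show ?thesis by linarith
  next
    case False
    hence "\<rho> * \<epsilon> * P1 > \<rho>\<^sup>2 * k" using inner by simp
    moreover have "4 * N\<^sup>2 * P2 \<ge> 0" using P2 by simp
    ultimately show ?thesis by linarith
  qed
  have eq: "(\<epsilon> powr p * (P1 * (1 / (\<rho> * \<epsilon>)))) * (- c)
         - (4 * (-1)\<^sup>2 * N\<^sup>2 * (\<epsilon> powr p * (P2 * (1 / (\<rho> * \<epsilon>)) * (1 / (\<rho> * \<epsilon>))))
            + 2 * n * (-1) * (\<epsilon> powr p * (P1 * (1 / (\<rho> * \<epsilon>)))))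
         = - K * (\<rho> * \<epsilon> * P1 + 4 * N\<^sup>2 * P2)"
    using e rho by (simp add: K_def c field_simps power2_eq_square)
  have "F \<le> K * (\<rho>\<^sup>2 * k)" using Fb ep2 by simp
  moreover have "K * (\<rho>\<^sup>2 * k) < K * (\<rho> * \<epsilon> * P1 + 4 * N\<^sup>2 * P2)"
    using key Kpos by simp
  ultimately show ?thesis unfolding eq by simp
qed



lemma phih_cont: "isCont (\<lambda>S. phi A B p (max S (-1/2))) S"
proof -
  have "isCont (\<lambda>S::real. max S (-1/2)) S" by (intro continuous_intros)
  moreover have "isCont (phi A B p) (max S (-1/2))"
    by (rule DERIV_isCont[OF phi_deriv]) simp
  ultimately show ?thesis using isCont_o2[of S "\<lambda>S::real. max S (-1/2)" "phi A B p"] by simp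
qed

lemma backward:
  fixes u :: "real^'n \<Rightarrow> real \<Rightarrow> real"
  assumes g: "0 \<le> \<gamma>" "\<gamma> \<le> 1" and p: "p = 2 / (2 - \<gamma>)" and adm: "admissible_h h"
    and sup: "(SUP s\<in>{0..1}. h s) = M"
    and e: "\<epsilon> > 0"
    and sol: "classical_solution (f_eps h \<gamma> p \<epsilon>) (cyl 1 0 0) u"
    and nonneg: "\<forall>(x,t)\<in>cyl 1 0 0. u x t \<ge> 0"
    and vb: "\<forall>(x,t)\<in>cyl 1 0 0. u x t powr (1/p) \<le> L"
    and lip: "\<forall>y z t. y \<in> ball 0 1 \<longrightarrow> z \<in> ball 0 1 \<longrightarrow> -1 < t \<longrightarrow> t < 1 \<longrightarrow>
                 u z t powr (1/p) \<le> u y t powr (1/p) + L * dist y z"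
    and L: "L \<ge> 0" and th: "\<theta> > 0"
    and x0: "norm x0 < 1/2" and t0: "-1/4 < t0" "t0 < 1/4" and r: "0 < r" "r < 1/4"
    and ux0: "u x0 t0 \<le> \<theta> * \<epsilon> powr p"
    and x1: "dist x0 x1 < r" and t1: "t0 - r\<^sup>2 < t1" "t1 < t0"
  shows "u x1 t1 \<le> max ((L * (4 * (2 * real CARD('n) + 3))) powr p)
            ((((\<theta> + 4) * (1 + (2 * real CARD('n) + 3)) powr p + 2 * (3 * (2 * M + 1)) * (2 * real CARD('n) + 3)) powr (1/p)
              + L * sqrt (2 * real CARD('n) + 3)) powr p) * (\<epsilon>\<^sup>2 + r\<^sup>2) powr (p/2)"
proof -
  have den: "1 \<le> 2 - \<gamma>" "2 - \<gamma> \<le> 2" using g by auto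
  have p1: "1 \<le> p" "p \<le> 2" unfolding p using den by (auto simp: le_divide_eq divide_le_eq)
  hence ppos: "p > 0" by simp
  have M0: "M \<ge> 0" by (rule adm_M_nonneg[OF adm sup])
  define n where "n = real CARD('n)"
  have n1: "n \<ge> 1" by (simp add: n_def)
  define c where "c = 2 * n + 1"
  define a where "a = 2 * n + 3"
  define A where "A = \<theta> + 4"
  define B where "B = 3 * (2 * M + 1)"
  define K1 where "K1 = A * (1 + a) powr p + 2 * B * a"
  define Lam where "Lam = K1 powr (1/p) + L * sqrt a"
  define C2 where "C2 = max ((L * (4 * a)) powr p) (Lam powr p)"
  define \<rho> where "\<rho> = sqrt (\<epsilon>\<^sup>2 + r\<^sup>2)"
  have a1: "a \<ge> 5" using n1 by (simp add: a_def)
  have Apos: "A \<ge> 4" using th by (simp add: A_def)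
  have Bpos: "B \<ge> 3" using M0 by (simp add: B_def)
  have K1pos: "K1 \<ge> 0" using Apos Bpos a1 by (simp add: K1_def)
  have rhopos: "\<rho> > 0" using e by (simp add: \<rho>_def add_pos_nonneg)
  have erho: "\<epsilon> \<le> \<rho>" unfolding \<rho>_def by (rule real_le_rsqrt) simp
  have rrho: "r \<le> \<rho>" unfolding \<rho>_def by (rule real_le_rsqrt) simp
  have rhop: "\<rho> powr p = (\<epsilon>\<^sup>2 + r\<^sup>2) powr (p/2)"
    unfolding \<rho>_def by (simp add: powr_half_sqrt[symmetric] powr_powr)
  have sa1: "sqrt a \<ge> 1" using a1 by simp
  have saa: "sqrt a \<le> a"
  proof (rule real_le_lsqrt)
    have "a * 1 \<le> a * a" using a1 by (intro mult_left_mono) auto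
    thus "a \<le> a\<^sup>2" by (simp add: power2_eq_square)
  qed (use a1 in auto)
  have r2: "r\<^sup>2 < 1/16"
  proof -
    have "r\<^sup>2 < (1/4)\<^sup>2" by (rule power_strict_mono) (use r in auto)
    thus ?thesis by (simp add: power2_eq_square)
  qed
  have x0Q: "(x0, t0) \<in> cyl 1 0 0" using x0 t0 by (simp add: cyl_def)
  have x1Q: "(x1, t1) \<in> cyl 1 0 0"
  proof -
    have "norm x1 \<le> norm x0 + dist x0 x1"
      using norm_triangle_ineq[of x0 "x1 - x0"] by (simp add: dist_norm norm_minus_commute)
    hence "norm x1 < 1" using x0 x1 r by simp
    moreover have "-1 < t1" "t1 < 1" using t0 t1 r2 by auto
    ultimately show ?thesis by (simp add: cyl_def)
  qed
  have upow_eq: "u y s = (u y s powr (1/p)) powr p" if "(y, s) \<in> cyl 1 0 0" for y s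
    using upow[of "u y s" p] nonneg that ppos by auto
  define v1 where "v1 = u x1 t1 powr (1/p)"
  have v1nn: "v1 \<ge> 0" by (simp add: v1_def)
  have main: "u x1 t1 \<le> C2 * \<rho> powr p"
  proof (cases "\<rho> \<ge> 1 / (4 * a)")
    case True
    have "u x1 t1 = v1 powr p" using upow_eq[OF x1Q] by (simp add: v1_def)
    also have "\<dots> \<le> L powr p" using vb x1Q v1nn ppos by (intro powr_mono2) (auto simp: v1_def)
    also have "\<dots> \<le> (L * (4 * a) * \<rho>) powr p"
    proof (rule powr_mono2)
      have "1 \<le> 4 * a * \<rho>" using True a1 by (simp add: field_simps)
      hence "L * 1 \<le> L * (4 * a * \<rho>)" using L by (intro mult_left_mono) auto
      thus "L \<le> L * (4 * a) * \<rho>" by (simp add: algebra_simps)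
    qed (use ppos L in auto)
    also have "\<dots> = (L * (4 * a)) powr p * \<rho> powr p" by (simp add: powr_mult)
    also have "\<dots> \<le> C2 * \<rho> powr p" by (intro mult_right_mono) (auto simp: C2_def)
    finally show ?thesis .
  next
    case False
    hence rsmall: "\<rho> < 1 / (4 * a)" by simp
    have v1le: "v1 \<le> Lam * \<rho>"
    proof (rule ccontr)
      assume "\<not> v1 \<le> Lam * \<rho>"
      hence v1big: "v1 > Lam * \<rho>" by simp
      define R where "R = sqrt a * \<rho>"
      define T where "T = t1 + \<rho>\<^sup>2"
      define tau where "tau = - c"
      define sig where "sig = (-1::real)"
      define \<alpha> where "\<alpha> = a * \<rho>\<^sup>2 + c * t1"
      define ph where "ph = (\<lambda>S. phi A B p (max S (-1/2)))"
      define \<Phi> where "\<Phi> = (\<lambda>z. \<epsilon> powr p * ph (z / (\<rho> * \<epsilon>)))"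
      define w where "w = (\<lambda>(y::real^'n) s. \<Phi> (\<alpha> + tau * s + sig * (norm (y - x1))\<^sup>2))"
      have qeq: "\<alpha> + tau * s + sig * (norm (y - x1))\<^sup>2 = a * \<rho>\<^sup>2 - c * (s - t1) - (norm (y - x1))\<^sup>2"
        for s and y :: "real^'n" by (simp add: \<alpha>_def tau_def sig_def algebra_simps)
      have weq: "w y s = \<epsilon> powr p * ph ((a * \<rho>\<^sup>2 - c * (s - t1) - (norm (y - x1))\<^sup>2) / (\<rho> * \<epsilon>))"
        for y s by (simp add: w_def \<Phi>_def qeq)
      have re: "\<rho> * \<epsilon> > 0" using rhopos e by simp
      have Rge: "\<rho> \<le> R" using sa1 rhopos by (simp add: R_def)
      have R2: "R\<^sup>2 = a * \<rho>\<^sup>2" using a1 by (simp add: R_def power_mult_distrib)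
      have Rle: "R \<le> a * \<rho>" using saa rhopos by (simp add: R_def)
      have c0: "c \<ge> 0" using n1 by (simp add: c_def)
      have ac: "a = c + 2" by (simp add: a_def c_def)
      have arho: "4 * a * \<rho> < 1" using rsmall a1 by (simp add: field_simps)
      have rar: "1 * \<rho> \<le> a * \<rho>" by (rule mult_right_mono) (use a1 rhopos in auto)
      have rho2: "\<rho>\<^sup>2 < 1/16"
      proof -
        have "\<rho> < 1/4" using arho rar by linarith
        hence "\<rho>\<^sup>2 < (1/4)\<^sup>2" by (intro power_strict_mono) (use rhopos in auto)
        thus ?thesis by (simp add: power2_eq_square)
      qed
      have ph_eq: "ph S = phi A B p S" if "S \<ge> -1/2" for S using that by (simp add: ph_def)
      have ph_neg: "ph S < 0" if "S < 0" for S
        unfolding ph_def by (rule phi_neg) (use that ppos Apos Bpos in auto)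
      have sub: "cball x1 R \<times> {t1..T} \<subseteq> cyl 1 0 0"
      proof
        fix q assume "q \<in> cball x1 R \<times> {t1..T}"
        then obtain y s where q: "q = (y, s)" "dist x1 y \<le> R" "t1 \<le> s" "s \<le> T" by auto
        have "norm y \<le> norm x1 + dist x1 y"
          using norm_triangle_ineq[of x1 "y - x1"] by (simp add: dist_norm norm_minus_commute)
        moreover have "norm x1 \<le> norm x0 + dist x0 x1"
          using norm_triangle_ineq[of x0 "x1 - x0"] by (simp add: dist_norm norm_minus_commute)
        moreover have "r + R < 1/2" using rrho Rle arho rar by linarith
        ultimately have "norm y < 1" using x0 x1 q by simp
        moreover have "-1 < s" "s < 1" using q t0 t1 r2 rho2 by (auto simp: T_def)
        ultimately show "q \<in> cyl 1 0 0" using q by (simp add: cyl_def)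
      qed
      have inQ: "(y, s) \<in> cyl 1 0 0" if "y \<in> cball x1 R" "s \<in> {t1..T}" for y s using sub that by blast
      have ballQ: "y \<in> ball 0 1" "-1 < s" "s < 1" if "(y, s) \<in> cyl 1 0 0" for y s
        using that by (auto simp: cyl_def)
      have uvpow: "u y s = (u y s powr (1/p)) powr p" if "(y, s) \<in> cyl 1 0 0" for y s
        by (rule upow_eq[OF that])
      have winit: "w y t1 \<le> K1 * \<rho> powr p" if y: "y \<in> cball x1 R" for y
      proof -
        define N where "N = norm (y - x1)"
        have NR: "N \<le> R" using y by (simp add: N_def dist_norm norm_minus_commute)
        have N2: "N\<^sup>2 \<le> a * \<rho>\<^sup>2" using NR R2 by (metis power_mono norm_ge_zero N_def)
        define S where "S = (a * \<rho>\<^sup>2 - N\<^sup>2) / (\<rho> * \<epsilon>)"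
        have S0: "S \<ge> 0" using N2 re by (simp add: S_def)
        have eS: "\<epsilon> * S \<le> a * \<rho>"
        proof -
          have "\<epsilon> * S = (a * \<rho>\<^sup>2 - N\<^sup>2) / \<rho>" using e rhopos by (simp add: S_def field_simps)
          also have "\<dots> \<le> a * \<rho>\<^sup>2 / \<rho>" using rhopos by (intro divide_right_mono) auto
          also have "\<dots> = a * \<rho>" using rhopos by (simp add: power2_eq_square)
          finally show ?thesis .
        qed
        have "w y t1 = \<epsilon> powr p * phi A B p S" using S0 by (simp add: weq S_def N_def ph_eq)
        also have "\<dots> \<le> \<epsilon> powr p * (A * (1 + S) powr p + 2 * B * S)"
          using phi_le[OF S0, of A B p] Apos Bpos by (intro mult_left_mono) auto
        also have "\<dots> = A * (\<epsilon> powr p * (1 + S) powr p) + 2 * B * (\<epsilon> powr p * S)"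
          by (simp add: algebra_simps)
        also have "\<dots> = A * (\<epsilon> * (1 + S)) powr p + 2 * B * (\<epsilon> powr p * S)"
          by (simp only: powr_mult)
        also have "\<dots> \<le> A * ((1 + a) * \<rho>) powr p + 2 * B * (a * \<rho> powr p)"
        proof (intro add_mono mult_left_mono)
          show "(\<epsilon> * (1 + S)) powr p \<le> ((1 + a) * \<rho>) powr p"
            using e S0 erho eS ppos by (intro powr_mono2) (auto simp: algebra_simps)
          have "\<epsilon> powr p * S = \<epsilon> powr (p - 1) * (\<epsilon> * S)"
          proof -
            have "\<epsilon> * \<epsilon> powr (p - 1) = \<epsilon> powr (1 + (p - 1))" by (rule powr_mult_base) (use e in simp)
            thus ?thesis by (simp add: algebra_simps)
          qed
          also have "\<dots> \<le> \<rho> powr (p - 1) * (a * \<rho>)"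
          proof -
            have pe: "\<epsilon> powr (p - 1) \<le> \<rho> powr (p - 1)" by (rule powr_mono2) (use p1 e erho in auto)
            show ?thesis by (rule mult_mono[OF pe eS]) (use e S0 in auto)
          qed
          also have "\<dots> = a * \<rho> powr p"
          proof -
            have "\<rho> * \<rho> powr (p - 1) = \<rho> powr (1 + (p - 1))" by (rule powr_mult_base) (use rhopos in simp)
            thus ?thesis by (simp add: algebra_simps)
          qed
          finally show "\<epsilon> powr p * S \<le> a * \<rho> powr p" .
        qed (use Apos Bpos in auto)
        also have "\<dots> = K1 * \<rho> powr p"
        proof -
          have pm: "((1 + a) * \<rho>) powr p = (1 + a) powr p * \<rho> powr p" by (rule powr_mult)
          show ?thesis unfolding pm K1_def by (simp add: algebra_simps)
        qed
        finally show ?thesis .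
      qed
      have uinit: "u y t1 > K1 * \<rho> powr p" if y: "y \<in> cball x1 R" for y
      proof -
        have yQ: "(y, t1) \<in> cyl 1 0 0" using inQ[OF y, of t1] by (simp add: T_def)
        have "v1 \<le> u y t1 powr (1/p) + L * dist y x1"
          using lip ballQ[OF yQ] ballQ[OF x1Q] unfolding v1_def by blast
        moreover have "L * dist y x1 \<le> L * (sqrt a * \<rho>)"
          using y L by (intro mult_left_mono) (auto simp: R_def dist_commute)
        ultimately have "u y t1 powr (1/p) \<ge> v1 - L * (sqrt a * \<rho>)" by linarith
        moreover have "v1 - L * (sqrt a * \<rho>) > K1 powr (1/p) * \<rho>"
          using v1big by (simp add: Lam_def algebra_simps)
        ultimately have vy: "u y t1 powr (1/p) > K1 powr (1/p) * \<rho>" by linarith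
        have "(K1 powr (1/p) * \<rho>) powr p < (u y t1 powr (1/p)) powr p"
          by (rule powr_less_mono2[OF ppos _ vy]) (use rhopos in simp)
        moreover have "(K1 powr (1/p) * \<rho>) powr p = K1 * \<rho> powr p"
        proof -
          have pm: "(K1 powr (1/p) * \<rho>) powr p = (K1 powr (1/p)) powr p * \<rho> powr p" by (rule powr_mult)
          show ?thesis unfolding pm upow[OF K1pos ppos] ..
        qed
        ultimately show ?thesis using uvpow[OF yQ] by simp
      qed
      have mp: "\<forall>y\<in>cball x1 R. \<forall>s\<in>{t1..T}. 1 * (w y s - u y s) < 0"
      proof (rule max_principle[OF sol sub, of 1 w])
        show "(1::real) = 1 \<or> (1::real) = -1" by simp
        show "continuous_on (cball x1 R \<times> {t1..T}) (\<lambda>(y,s). w y s)"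
        proof -
          have "continuous_on UNIV ph"
            unfolding ph_def by (rule continuous_at_imp_continuous_on) (blast intro: phih_cont)
          moreover have gc: "continuous_on (cball x1 R \<times> {t1..T})
                  (\<lambda>q. (\<alpha> + tau * snd q + sig * (norm (fst q - x1))\<^sup>2) / (\<rho> * \<epsilon>))"
            using re by (intro continuous_intros) auto
          ultimately have "continuous_on (cball x1 R \<times> {t1..T})
                  (\<lambda>q. ph ((\<alpha> + tau * snd q + sig * (norm (fst q - x1))\<^sup>2) / (\<rho> * \<epsilon>)))"
            by (rule continuous_on_compose2) simp
          hence "continuous_on (cball x1 R \<times> {t1..T})
                  (\<lambda>q. \<epsilon> powr p * ph ((\<alpha> + tau * snd q + sig * (norm (fst q - x1))\<^sup>2) / (\<rho> * \<epsilon>)))"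
            by (rule continuous_on_mult_left)
          thus ?thesis by (simp add: w_def \<Phi>_def case_prod_beta)
        qed
        show "\<forall>y\<in>cball x1 R. 1 * (w y t1 - u y t1) < 0"
          using winit uinit by fastforce
        show "\<forall>y s. dist x1 y = R \<and> s \<in> {t1..T} \<longrightarrow> 1 * (w y s - u y s) < 0"
        proof (intro allI impI)
          fix y s assume ys: "dist x1 y = R \<and> s \<in> {t1..T}"
          hence yc: "y \<in> cball x1 R" by simp
          show "1 * (w y s - u y s) < 0"
          proof (cases "s = t1")
            case True thus ?thesis using winit[OF yc] uinit[OF yc] by simp
          next
            case False
            hence st: "s > t1" using ys by auto
            have "(norm (y - x1))\<^sup>2 = a * \<rho>\<^sup>2" using ys R2 by (simp add: dist_norm norm_minus_commute)
            hence "a * \<rho>\<^sup>2 - c * (s - t1) - (norm (y - x1))\<^sup>2 = - c * (s - t1)" by simp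
            moreover have "- c * (s - t1) < 0"
            proof -
              have "c * (s - t1) > 0" using st n1 by (simp add: c_def)
              thus ?thesis by simp
            qed
            ultimately have "(a * \<rho>\<^sup>2 - c * (s - t1) - (norm (y - x1))\<^sup>2) / (\<rho> * \<epsilon>) < 0"
              using re by (simp add: divide_neg_pos)
            hence "w y s < 0" unfolding weq using ph_neg e by (simp add: mult_pos_neg)
            moreover have "u y s \<ge> 0" using nonneg inQ[OF yc] ys by auto
            ultimately show ?thesis by simp
          qed
        qed
        show "\<forall>y s. y \<in> ball x1 R \<and> t1 < s \<and> s \<le> T \<and> w y s = u y s \<longrightarrow>
           (\<exists>wt W2 \<eta>. \<eta> > 0 \<and> ((\<lambda>s. w y s) has_real_derivative wt) (at s) \<and>
              (\<forall>i. \<exists>d1. (\<forall>\<theta>. \<bar>\<theta>\<bar> < \<eta> \<longrightarrow> ((\<lambda>\<theta>. w (y + \<theta> *\<^sub>R axis i 1) s) has_real_derivative d1 \<theta>) (at \<theta>))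
                     \<and> (d1 has_real_derivative W2 i) (at 0)) \<and>
              1 * (wt - (\<Sum>i\<in>UNIV. W2 i) + f_eps h \<gamma> p \<epsilon> (w y s)) < 0)"
        proof (intro allI impI)
          fix y s assume ys: "y \<in> ball x1 R \<and> t1 < s \<and> s \<le> T \<and> w y s = u y s"
          have yQ: "(y, s) \<in> cyl 1 0 0" using inQ ys by auto
          define N where "N = norm (y - x1)"
          define z0 where "z0 = \<alpha> + tau * s + sig * N\<^sup>2"
          define S0 where "S0 = z0 / (\<rho> * \<epsilon>)"
          have w0: "w y s = \<Phi> z0" by (simp add: w_def z0_def N_def)
          have Pnn: "\<Phi> z0 \<ge> 0" using ys nonneg yQ w0 by auto
          have S0nn: "S0 \<ge> 0"
          proof (rule ccontr)
            assume "\<not> S0 \<ge> 0"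
            hence "ph S0 < 0" using ph_neg by simp
            hence "\<Phi> z0 < 0" using e by (simp add: \<Phi>_def S0_def[symmetric] mult_pos_neg)
            thus False using Pnn by simp
          qed
          have PhiS: "\<Phi> z0 = \<epsilon> powr p * phi A B p S0" using S0nn by (simp add: \<Phi>_def S0_def[symmetric] ph_eq)
          define \<eta> where "\<eta> = \<rho> * \<epsilon> / 2"
          have etapos: "\<eta> > 0" using re by (simp add: \<eta>_def)
          define \<Phi>1 where "\<Phi>1 = (\<lambda>z. \<epsilon> powr p * (phi1 A B p (z / (\<rho> * \<epsilon>)) * (1 / (\<rho> * \<epsilon>))))"
          define \<Phi>2 where "\<Phi>2 = \<epsilon> powr p * (phi2 A B p S0 * (1 / (\<rho> * \<epsilon>)) * (1 / (\<rho> * \<epsilon>)))"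
          have z0eq: "z0 = S0 * (\<rho> * \<epsilon>)" using e rhopos by (simp add: S0_def)
          have d1: "\<forall>z. \<bar>z - z0\<bar> < \<eta> \<longrightarrow> (\<Phi> has_real_derivative \<Phi>1 z) (at z)"
          proof (intro allI impI)
            fix z assume zz: "\<bar>z - z0\<bar> < \<eta>"
            have zg: "z > - (\<rho> * \<epsilon>) / 2"
            proof -
              have "z0 \<ge> 0" using z0eq S0nn re by simp
              moreover have "- \<eta> < z - z0" using zz by (simp add: abs_less_iff)
              ultimately show ?thesis unfolding \<eta>_def by linarith
            qed
            have Sg: "z / (\<rho> * \<epsilon>) > -1/2" using zg re by (simp add: field_simps)
            have "(phi A B p has_real_derivative phi1 A B p (z / (\<rho> * \<epsilon>))) (at (z / (\<rho> * \<epsilon>)))"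
              by (rule phi_deriv) (use Sg in simp)
            moreover have gd: "((\<lambda>z. z / (\<rho> * \<epsilon>)) has_real_derivative 1 / (\<rho> * \<epsilon>)) (at z)"
              by (rule DERIV_cdivide[OF DERIV_ident])
            ultimately have "((\<lambda>z. phi A B p (z / (\<rho> * \<epsilon>))) has_real_derivative phi1 A B p (z / (\<rho> * \<epsilon>)) * (1 / (\<rho> * \<epsilon>))) (at z)"
              by (rule DERIV_chain2[where f = "phi A B p" and g = "\<lambda>z. z / (\<rho> * \<epsilon>)" and x = z])
            hence D: "((\<lambda>z. \<epsilon> powr p * phi A B p (z / (\<rho> * \<epsilon>))) has_real_derivative \<Phi>1 z) (at z)"
              unfolding \<Phi>1_def by (rule DERIV_cmult)
            show "(\<Phi> has_real_derivative \<Phi>1 z) (at z)"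
            proof (rule has_field_derivative_transform_within_open[OF D, of "{- (\<rho> * \<epsilon>) / 2 <..}"])
              show "open {- (\<rho> * \<epsilon>) / 2 <..}" by simp
              show "z \<in> {- (\<rho> * \<epsilon>) / 2 <..}" using zg by simp
              fix x assume "x \<in> {- (\<rho> * \<epsilon>) / 2 <..}"
              hence "x / (\<rho> * \<epsilon>) > -1/2" using re by (simp add: field_simps)
              thus "\<epsilon> powr p * phi A B p (x / (\<rho> * \<epsilon>)) = \<Phi> x" by (simp add: \<Phi>_def ph_eq)
            qed
          qed
          have d2: "(\<Phi>1 has_real_derivative \<Phi>2) (at z0)"
          proof -
            have "(phi1 A B p has_real_derivative phi2 A B p S0) (at (z0 / (\<rho> * \<epsilon>)))"
              unfolding S0_def[symmetric] by (rule phi1_deriv) (use S0nn in simp)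
            moreover have gd: "((\<lambda>z. z / (\<rho> * \<epsilon>)) has_real_derivative 1 / (\<rho> * \<epsilon>)) (at z0)"
              by (rule DERIV_cdivide[OF DERIV_ident])
            ultimately have "((\<lambda>z. phi1 A B p (z / (\<rho> * \<epsilon>))) has_real_derivative phi2 A B p S0 * (1 / (\<rho> * \<epsilon>))) (at z0)"
              by (rule DERIV_chain2[where f = "phi1 A B p" and g = "\<lambda>z. z / (\<rho> * \<epsilon>)" and x = z0])
            hence "((\<lambda>z. phi1 A B p (z / (\<rho> * \<epsilon>)) * (1 / (\<rho> * \<epsilon>))) has_real_derivative
                     phi2 A B p S0 * (1 / (\<rho> * \<epsilon>)) * (1 / (\<rho> * \<epsilon>))) (at z0)"
              by (rule DERIV_cmult_right)
            thus ?thesis unfolding \<Phi>1_def \<Phi>2_def by (rule DERIV_cmult)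
          qed
          define P1 where "P1 = phi1 A B p S0"
          define P2 where "P2 = phi2 A B p S0"
          define k where "k = k1 M \<gamma> (phi A B p S0)"
          have P1pos: "P1 > 0" unfolding P1_def by (rule phi1_pos) (use p1 S0nn Apos Bpos in auto)
          have P2nn: "P2 \<ge> 0" unfolding P2_def by (rule phi2_nonneg) (use p1 S0nn Apos Bpos in auto)
          have knn: "k \<ge> 0" unfolding k_def k1_def using M0 g by auto
          have outer: "P2 \<ge> k" unfolding P2_def k_def
            by (rule phi2_ge_k1[OF g p]) (use Apos M0 S0nn in \<open>auto simp: B_def\<close>)
          have inner: "\<rho> * \<epsilon> * P1 > \<rho>\<^sup>2 * k" if Nr: "N < \<rho>/2"
          proof -
            have z0ge: "z0 \<ge> \<rho>\<^sup>2"
            proof -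
              have e1: "z0 = a * \<rho>\<^sup>2 - c * (s - t1) - N\<^sup>2" using qeq by (simp add: z0_def N_def)
              have e2: "c * (s - t1) \<le> c * \<rho>\<^sup>2" using ys c0 by (intro mult_left_mono) (auto simp: T_def)
              have "N\<^sup>2 \<le> (\<rho>/2)\<^sup>2" using Nr by (intro power_mono) (auto simp: N_def)
              hence e3: "N\<^sup>2 \<le> \<rho>\<^sup>2 / 4" by (simp add: power_divide)
              have e4: "a * \<rho>\<^sup>2 = c * \<rho>\<^sup>2 + 2 * \<rho>\<^sup>2" by (simp add: ac algebra_simps)
              have e5: "\<rho>\<^sup>2 \<ge> 0" by simp
              show ?thesis using e1 e2 e3 e4 e5 by linarith
            qed
            have eS0: "\<epsilon> * S0 \<ge> \<rho>"
            proof -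
              have "\<epsilon> * S0 = z0 / \<rho>" using e rhopos by (simp add: S0_def field_simps)
              also have "\<dots> \<ge> \<rho>\<^sup>2 / \<rho>" using z0ge rhopos by (intro divide_right_mono) auto
              finally show ?thesis using rhopos by (simp add: power2_eq_square)
            qed
            have S01: "S0 \<ge> 1"
            proof -
              have "\<epsilon> * 1 \<le> \<epsilon> * S0" using eS0 erho by simp
              thus ?thesis using e by simp
            qed
            have Sp1: "S0 powr p \<ge> 1" using S01 p1 by (intro ge_one_powr_ge_zero) auto
            have big: "A * S0 powr p > 1"
            proof -
              have "4 * 1 \<le> A * S0 powr p" using Apos Sp1 by (intro mult_mono) auto
              thus ?thesis by simp
            qed
            have kb: "k \<le> \<gamma> * S0 powr (p - 2)" unfolding k_def
              by (rule k1_big[OF g _ _ phi_ge[OF p1(1)] p big]) (use Apos S0nn Bpos in auto)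
            have kb2: "k \<le> S0 powr (p - 2)"
            proof -
              have "\<gamma> * S0 powr (p - 2) \<le> 1 * S0 powr (p - 2)" using g by (intro mult_right_mono) auto
              thus ?thesis using kb by simp
            qed
            have P1ge: "P1 \<ge> A * S0 powr (p - 1)" unfolding P1_def
              by (rule phi1_ge) (use p1 S0nn Apos Bpos in auto)
            have Seq: "S0 powr (p - 1) = S0 * S0 powr (p - 2)"
            proof -
              have "S0 * S0 powr (p - 2) = S0 powr (1 + (p - 2))" by (rule powr_mult_base) (use S0nn in simp)
              thus ?thesis by simp
            qed
            have Spos: "S0 powr (p - 2) > 0" using S01 by simp
            have "\<rho>\<^sup>2 * k \<le> \<rho>\<^sup>2 * S0 powr (p - 2)" using kb2 by (intro mult_left_mono) auto
            also have "\<dots> < A * \<rho>\<^sup>2 * S0 powr (p - 2)" using Apos Spos rhopos by simp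
            also have "\<dots> \<le> A * (\<rho> * (\<epsilon> * S0)) * S0 powr (p - 2)"
            proof -
              have "\<rho> * \<rho> \<le> \<rho> * (\<epsilon> * S0)" using eS0 rhopos by (intro mult_left_mono) auto
              hence "A * \<rho>\<^sup>2 \<le> A * (\<rho> * (\<epsilon> * S0))" using Apos by (simp add: power2_eq_square)
              thus ?thesis using Spos by (intro mult_right_mono) auto
            qed
            also have "\<dots> = \<rho> * \<epsilon> * (A * S0 powr (p - 1))" by (simp add: Seq algebra_simps)
            also have "\<dots> \<le> \<rho> * \<epsilon> * P1" using P1ge re by (intro mult_left_mono) auto
            finally show ?thesis .
          qed
          have Fb: "f_eps h \<gamma> p \<epsilon> (\<Phi> z0) \<le> \<epsilon> powr (p - 2) * k"
          proof -
            have "f_eps h \<gamma> p \<epsilon> (\<Phi> z0) \<le> \<epsilon> powr (p - 2) * k1 M \<gamma> (\<Phi> z0 / \<epsilon> powr p)"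
              by (rule f_eps_bound[OF adm sup g p e Pnn])
            also have "\<Phi> z0 / \<epsilon> powr p = phi A B p S0" using e by (simp add: PhiS)
            finally show ?thesis by (simp add: k_def)
          qed
          have core: "(\<epsilon> powr p * (P1 * (1 / (\<rho> * \<epsilon>)))) * (- c)
               - (4 * (-1)\<^sup>2 * N\<^sup>2 * (\<epsilon> powr p * (P2 * (1 / (\<rho> * \<epsilon>)) * (1 / (\<rho> * \<epsilon>))))
                  + 2 * n * (-1) * (\<epsilon> powr p * (P1 * (1 / (\<rho> * \<epsilon>))))) + f_eps h \<gamma> p \<epsilon> (\<Phi> z0) < 0"
            by (rule bw_core[OF e rhopos P1pos P2nn knn c_def _ inner Fb]) (use outer in \<open>auto simp: N_def\<close>)
          have ineq: "1 * (\<Phi>1 z0 * tau - (4 * sig\<^sup>2 * (norm (y - x1))\<^sup>2 * \<Phi>2 + 2 * real CARD('n) * sig * \<Phi>1 z0)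
                 + f_eps h \<gamma> p \<epsilon> (\<Phi> z0)) < 0"
            using core by (simp add: \<Phi>1_def \<Phi>2_def tau_def sig_def n_def S0_def[symmetric] P1_def P2_def N_def)
          have "\<exists>wt W2 \<eta>. \<eta> > 0 \<and> ((\<lambda>s. \<Phi> (\<alpha> + tau * s + sig * (norm (y - x1))\<^sup>2)) has_real_derivative wt) (at s) \<and>
              (\<forall>i. \<exists>d1. (\<forall>\<theta>. \<bar>\<theta>\<bar> < \<eta> \<longrightarrow> ((\<lambda>\<theta>. \<Phi> (\<alpha> + tau * s + sig * (norm (y + \<theta> *\<^sub>R axis i 1 - x1))\<^sup>2)) has_real_derivative d1 \<theta>) (at \<theta>))
                     \<and> (d1 has_real_derivative W2 i) (at 0)) \<and>
              1 * (wt - (\<Sum>i\<in>UNIV. W2 i) + f_eps h \<gamma> p \<epsilon> (\<Phi> (\<alpha> + tau * s + sig * (norm (y - x1))\<^sup>2))) < 0"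
            by (rule radial_bar[OF etapos d1 d2]) (use ineq in \<open>simp_all add: z0_def N_def\<close>)
          thus "\<exists>wt W2 \<eta>. \<eta> > 0 \<and> ((\<lambda>s. w y s) has_real_derivative wt) (at s) \<and>
              (\<forall>i. \<exists>d1. (\<forall>\<theta>. \<bar>\<theta>\<bar> < \<eta> \<longrightarrow> ((\<lambda>\<theta>. w (y + \<theta> *\<^sub>R axis i 1) s) has_real_derivative d1 \<theta>) (at \<theta>))
                     \<and> (d1 has_real_derivative W2 i) (at 0)) \<and>
              1 * (wt - (\<Sum>i\<in>UNIV. W2 i) + f_eps h \<gamma> p \<epsilon> (w y s)) < 0"
            by (simp add: w_def)
        qed
      qed
      have x0c: "x0 \<in> cball x1 R" using x1 rrho Rge by (simp add: dist_commute)
      have t0T: "t0 \<in> {t1..T}"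
      proof -
        have "r\<^sup>2 \<le> \<rho>\<^sup>2" using rrho r by (intro power_mono) auto
        thus ?thesis using t1 by (auto simp: T_def)
      qed
      have "w x0 t0 < u x0 t0" using mp x0c t0T by force
      moreover have "w x0 t0 > \<theta> * \<epsilon> powr p"
      proof -
        define q0 where "q0 = a * \<rho>\<^sup>2 - c * (t0 - t1) - (norm (x0 - x1))\<^sup>2"
        have "q0 \<ge> \<rho>\<^sup>2"
        proof -
          have "c * (t0 - t1) \<le> c * \<rho>\<^sup>2"
          proof -
            have "r\<^sup>2 \<le> \<rho>\<^sup>2" using rrho r by (intro power_mono) auto
            thus ?thesis using t1 c0 by (intro mult_left_mono) auto
          qed
          moreover have "(norm (x0 - x1))\<^sup>2 \<le> \<rho>\<^sup>2"
            using x1 rrho by (intro power_mono) (auto simp: dist_norm)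
          moreover have "a * \<rho>\<^sup>2 = c * \<rho>\<^sup>2 + 2 * \<rho>\<^sup>2" by (simp add: ac algebra_simps)
          moreover have "\<rho>\<^sup>2 \<ge> 0" by simp
          ultimately show ?thesis unfolding q0_def by linarith
        qed
        define S where "S = q0 / (\<rho> * \<epsilon>)"
        have S1: "S \<ge> 1"
        proof -
          have "S \<ge> \<rho>\<^sup>2 / (\<rho> * \<epsilon>)" using \<open>q0 \<ge> \<rho>\<^sup>2\<close> re by (simp add: S_def divide_right_mono)
          moreover have "\<rho>\<^sup>2 / (\<rho> * \<epsilon>) = \<rho> / \<epsilon>" using rhopos e by (simp add: power2_eq_square)
          moreover have "\<rho> / \<epsilon> \<ge> 1" using erho e by simp
          ultimately show ?thesis by linarith
        qed
        have "w x0 t0 = \<epsilon> powr p * phi A B p S" using S1 by (simp add: weq q0_def S_def ph_eq)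
        moreover have "phi A B p S \<ge> A * S powr p" by (rule phi_ge) (use p1 S1 Apos Bpos in auto)
        moreover have "S powr p \<ge> 1" using S1 p1 by (intro ge_one_powr_ge_zero) auto
        ultimately have "w x0 t0 \<ge> \<epsilon> powr p * A"
          using e Apos by (smt (verit) mult_left_mono mult_right_mono powr_ge_zero mult_cancel_left1 mult.commute)
        moreover have "\<epsilon> powr p * A > \<theta> * \<epsilon> powr p" using e by (simp add: A_def algebra_simps)
        ultimately show ?thesis by linarith
      qed
      ultimately show False using ux0 by simp
    qed
    have "u x1 t1 = v1 powr p" using upow_eq[OF x1Q] by (simp add: v1_def)
    also have "\<dots> \<le> (Lam * \<rho>) powr p" using v1le v1nn ppos by (intro powr_mono2) auto
    also have "\<dots> = Lam powr p * \<rho> powr p" by (simp add: powr_mult)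
    also have "\<dots> \<le> C2 * \<rho> powr p" by (intro mult_right_mono) (auto simp: C2_def)
    finally show ?thesis .
  qed
  thus ?thesis unfolding rhop C2_def Lam_def K1_def A_def B_def a_def n_def by simp
qed



theorem lemma3p4:
  fixes \<gamma> \<theta> Cc M :: real
  assumes "0 \<le> \<gamma>" "\<gamma> \<le> 1" "\<theta> > 0" "Cc > 0"
  shows "\<exists>C>0. \<forall>h. admissible_h h \<and> (SUP s\<in>{0..1}. h s) = M \<longrightarrow>
     (\<forall>\<epsilon>>0. \<forall>u :: real^'n \<Rightarrow> real \<Rightarrow> real.
        (let \<beta> = 2 / (2 - \<gamma>) in
          classical_solution (f_eps h \<gamma> \<beta> \<epsilon>) (cyl 1 0 0) u \<and>
          (\<forall>(x,t)\<in>cyl 1 0 0. u x t \<ge> 0) \<and>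
          (\<exists>A B. A \<ge> 0 \<and> B \<ge> 0 \<and> A + B \<le> Cc \<and>
             (\<forall>(x,t)\<in>cyl 1 0 0. u x t powr (2 / \<beta>) \<le> A) \<and>
             (\<forall>(x,t)\<in>cyl 1 0 0. \<forall>g. u x t > 0 \<and>
                ((\<lambda>y. u y t powr (1 / \<beta>)) has_derivative (\<lambda>v. g \<bullet> v)) (at x)
                \<longrightarrow> (norm g)\<^sup>2 \<le> B))
          \<longrightarrow> (\<forall>r x0 t0. 0 < r \<and> r < 1/4 \<and> (x0, t0) \<in> cyl (1/2) 0 0 \<and>
                 u x0 t0 \<le> \<theta> * \<epsilon> powr \<beta> \<longrightarrow>
                 (\<forall>(x,t)\<in>cyl r x0 t0. u x t \<le> C * (\<epsilon>\<^sup>2 + r\<^sup>2) powr (1 / (2 - \<gamma>))))))"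
proof -
  note g = assms(1,2)
  define p where "p = 2 / (2 - \<gamma>)"
  have den: "1 \<le> 2 - \<gamma>" "2 - \<gamma> \<le> 2" using g by auto
  have p1: "1 \<le> p" "p \<le> 2" unfolding p_def using den by (auto simp: le_divide_eq divide_le_eq)
  hence ppos: "p > 0" by simp
  have nz: "2 - \<gamma> \<noteq> 0" using den by simp
  have half: "1 / (2 - \<gamma>) = p / 2" using nz by (simp add: p_def field_simps)
  define L where "L = sqrt Cc"
  have L0: "L \<ge> 0" using assms by (simp add: L_def)
  define n where "n = real CARD('n)"
  define C1 where "C1 = (4 * (\<theta> powr (1/p) + L) + 1) powr p * (2 * n + 2) powr (p/2)"
  define C2 where "C2 = max ((L * (4 * (2 * n + 3))) powr p)
            ((((\<theta> + 4) * (1 + (2 * n + 3)) powr p + 2 * (3 * (2 * M + 1)) * (2 * n + 3)) powr (1/p)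
              + L * sqrt (2 * n + 3)) powr p)"
  define C where "C = max C1 C2 + 1"
  have C1nn: "C1 \<ge> 0" by (simp add: C1_def)
  have Cpos: "C > 0" using C1nn by (simp add: C_def)
  show ?thesis unfolding Let_def
  proof (intro exI[of _ C] conjI allI impI Cpos)
    fix h :: "real \<Rightarrow> real" and \<epsilon> :: real and u :: "real^'n \<Rightarrow> real \<Rightarrow> real"
      and r :: real and x0 :: "real^'n" and t0 :: real
    assume hM: "admissible_h h \<and> (SUP s\<in>{0..1}. h s) = M"
    assume e: "\<epsilon> > 0"
    assume H: "classical_solution (f_eps h \<gamma> (2 / (2 - \<gamma>)) \<epsilon>) (cyl 1 0 0) u \<and>
          (\<forall>(x,t)\<in>cyl 1 0 0. u x t \<ge> 0) \<and>
          (\<exists>A B. A \<ge> 0 \<and> B \<ge> 0 \<and> A + B \<le> Cc \<and>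
             (\<forall>(x,t)\<in>cyl 1 0 0. u x t powr (2 / (2 / (2 - \<gamma>))) \<le> A) \<and>
             (\<forall>(x,t)\<in>cyl 1 0 0. \<forall>g. u x t > 0 \<and>
                ((\<lambda>y. u y t powr (1 / (2 / (2 - \<gamma>)))) has_derivative (\<lambda>v. g \<bullet> v)) (at x)
                \<longrightarrow> (norm g)\<^sup>2 \<le> B))"
    assume R: "0 < r \<and> r < 1/4 \<and> (x0, t0) \<in> cyl (1/2) 0 0 \<and> u x0 t0 \<le> \<theta> * \<epsilon> powr (2 / (2 - \<gamma>))"
    have adm: "admissible_h h" and sup: "(SUP s\<in>{0..1}. h s) = M" using hM by auto
    have H': "classical_solution (f_eps h \<gamma> p \<epsilon>) (cyl 1 0 0) u \<and>
          (\<forall>(x,t)\<in>cyl 1 0 0. u x t \<ge> 0) \<and>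
          (\<exists>A B. A \<ge> 0 \<and> B \<ge> 0 \<and> A + B \<le> Cc \<and>
             (\<forall>(x,t)\<in>cyl 1 0 0. u x t powr (2 / p) \<le> A) \<and>
             (\<forall>(x,t)\<in>cyl 1 0 0. \<forall>g. u x t > 0 \<and>
                ((\<lambda>y. u y t powr (1 / p)) has_derivative (\<lambda>v. g \<bullet> v)) (at x)
                \<longrightarrow> (norm g)\<^sup>2 \<le> B))"
      using H unfolding p_def .
    have sol: "classical_solution (f_eps h \<gamma> p \<epsilon>) (cyl 1 0 0) u" using H' by blast
    have nonneg: "\<forall>(x,t)\<in>cyl 1 0 0. u x t \<ge> 0" using H' by blast
    obtain A B where AB: "A \<ge> 0" "B \<ge> 0" "A + B \<le> Cc"
        "\<forall>(x,t)\<in>cyl 1 0 0. u x t powr (2 / p) \<le> A"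
        "\<forall>(x,t)\<in>cyl 1 0 0. \<forall>g. u x t > 0 \<and>
                ((\<lambda>y. u y t powr (1 / p)) has_derivative (\<lambda>v. g \<bullet> v)) (at x)
                \<longrightarrow> (norm g)\<^sup>2 \<le> B"
      using H' by blast
    have vb: "\<forall>(x,t)\<in>cyl 1 0 0. u x t powr (1/p) \<le> L"
    proof (intro ballI, clarify)
      fix x :: "real^'n" and t :: real assume Q: "(x, t) \<in> cyl 1 0 0"
      have "u x t powr (2 / p) \<le> Cc" using AB Q by fastforce
      hence "sqrt (u x t powr (2 / p)) \<le> L" unfolding L_def by simp
      moreover have "sqrt (u x t powr (2 / p)) = u x t powr (1/p)"
      proof -
        have "sqrt (u x t powr (2 / p)) = (u x t powr (2 / p)) powr (1/2)" by (simp add: powr_half_sqrt)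
        also have "\<dots> = u x t powr (1/p)" by (simp add: powr_powr)
        finally show ?thesis .
      qed
      ultimately show "u x t powr (1/p) \<le> L" by simp
    qed
    have sB: "sqrt B \<le> L" using AB unfolding L_def by simp
    have lip: "\<forall>y z t. y \<in> ball 0 1 \<longrightarrow> z \<in> ball 0 1 \<longrightarrow> -1 < t \<longrightarrow> t < 1 \<longrightarrow>
                 u z t powr (1/p) \<le> u y t powr (1/p) + L * dist y z"
    proof (intro allI impI)
      fix y z :: "real^'n" and t :: real
      assume yz: "y \<in> ball 0 1" "z \<in> ball 0 1" "-1 < t" "t < 1"
      have "u z t powr (1/p) \<le> u y t powr (1/p) + sqrt B * dist y z"
        by (rule lipschitz_v[OF sol nonneg AB(5) _ AB(2) yz]) (use ppos in simp)
      also have "sqrt B * dist y z \<le> L * dist y z" using sB by (intro mult_right_mono) auto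
      finally show "u z t powr (1/p) \<le> u y t powr (1/p) + L * dist y z" by simp
    qed
    have r: "0 < r" "r < 1/4" using R by auto
    have x0: "norm x0 < 1/2" and t0: "-1/4 < t0" "t0 < 1/4" using R by (auto simp: cyl_def power2_eq_square)
    have ux0: "u x0 t0 \<le> \<theta> * \<epsilon> powr p" using R by (simp add: p_def)
    have Eq: "(\<epsilon>\<^sup>2 + r\<^sup>2) powr (1 / (2 - \<gamma>)) = (\<epsilon>\<^sup>2 + r\<^sup>2) powr (p/2)" by (simp add: half)
    have Enn: "(\<epsilon>\<^sup>2 + r\<^sup>2) powr (p/2) \<ge> 0" by simp
    show "\<forall>(x,t)\<in>cyl r x0 t0. u x t \<le> C * (\<epsilon>\<^sup>2 + r\<^sup>2) powr (1 / (2 - \<gamma>))"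
    proof (intro ballI, clarify)
      fix x :: "real^'n" and t :: real assume xt: "(x, t) \<in> cyl r x0 t0"
      hence x: "dist x0 x < r" and t: "t0 - r\<^sup>2 < t" "t < t0 + r\<^sup>2" by (auto simp: cyl_def)
      have "u x t \<le> max C1 C2 * (\<epsilon>\<^sup>2 + r\<^sup>2) powr (p/2)"
      proof (cases "t0 \<le> t")
        case True
        have "u x t \<le> C1 * (\<epsilon>\<^sup>2 + r\<^sup>2) powr (p/2)"
          using forward[OF g p_def adm e sol nonneg vb lip L0 assms(3) x0 t0 r ux0 x True t(2)]
          by (simp add: C1_def n_def)
        also have "\<dots> \<le> max C1 C2 * (\<epsilon>\<^sup>2 + r\<^sup>2) powr (p/2)" by (intro mult_right_mono) auto
        finally show ?thesis .
      next
        case False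
        have "u x t \<le> C2 * (\<epsilon>\<^sup>2 + r\<^sup>2) powr (p/2)"
          using backward[OF g p_def adm sup e sol nonneg vb lip L0 assms(3) x0 t0 r ux0 x t(1)] False
          by (simp add: C2_def n_def)
        also have "\<dots> \<le> max C1 C2 * (\<epsilon>\<^sup>2 + r\<^sup>2) powr (p/2)" by (intro mult_right_mono) auto
        finally show ?thesis .
      qed
      also have "\<dots> \<le> C * (\<epsilon>\<^sup>2 + r\<^sup>2) powr (p/2)" by (intro mult_right_mono) (auto simp: C_def)
      finally show "u x t \<le> C * (\<epsilon>\<^sup>2 + r\<^sup>2) powr (1 / (2 - \<gamma>))" by (simp add: Eq)
    qed
  qed
qed



end
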